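(* For every separable complex Hilbert space $\mathcal{H}$ and every finite $p>0$, $\mathbf{C}_1(\mathcal{H})\subseteq\mathbf{C}_p(\mathcal{H})$.
   Context: Observables are self-adjoint operators on $\mathcal{H}$. For an operator $A$ on $\mathcal{H}$, $A^T$ is the operator on the dual $\mathcal{H}^*$ with $(A^T\eta)(\varphi)=\eta(A\varphi)$. For a finite collection $\mathcal{A}=\{A_1,\dots,A_K\}$ of observables and $0<p<\infty$, $C_{\mathcal{A},p}=\sum_{k=1}^K|A_k\otimes I^T-I\otimes A_k^T|^p$, an operator on $\mathcal{H}\otimes\mathcal{H}^*$. $\mathbf{C}_p(\mathcal{H})=\{C_{\mathcal{A},p}:\ \mathcal{A}\text{ a finite collection of observables on }\mathcal{H}\text{, each with finite spectrum}\}$. *)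

theory Defs
  imports "HOL-Analysis.Analysis" "HOL-Computational_Algebra.Polynomial" "HOL-Library.FuncSet"
begin

text \<open>A complex Hilbert space is given by a carrier type 'a with its additive group,
  a complex scalar multiplication sc and an inner product ip (linear in the second
  argument, conjugate-linear in the first).\<close>

definition hnorm :: "('a \<Rightarrow> 'a \<Rightarrow> complex) \<Rightarrow> 'a \<Rightarrow> real" where
  "hnorm ip x = sqrt (Re (ip x x))"

definition is_complex_hilbert ::
  "(complex \<Rightarrow> 'a::ab_group_add \<Rightarrow> 'a) \<Rightarrow> ('a \<Rightarrow> 'a \<Rightarrow> complex) \<Rightarrow> bool" where
  "is_complex_hilbert sc ip \<longleftrightarrow>
     (\<forall>x. sc 1 x = x) \<and>
     (\<forall>a b x. sc a (sc b x) = sc (a * b) x) \<and>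
     (\<forall>a x y. sc a (x + y) = sc a x + sc a y) \<and>
     (\<forall>a b x. sc (a + b) x = sc a x + sc b x) \<and>
     (\<forall>x y. ip x y = cnj (ip y x)) \<and>
     (\<forall>x y z. ip x (y + z) = ip x y + ip x z) \<and>
     (\<forall>a x y. ip x (sc a y) = a * ip x y) \<and>
     (\<forall>x. 0 \<le> Re (ip x x)) \<and>
     (\<forall>x. ip x x = 0 \<longrightarrow> x = 0) \<and>
     (\<forall>f :: nat \<Rightarrow> 'a.
        (\<forall>e>0. \<exists>N. \<forall>m\<ge>N. \<forall>n\<ge>N. hnorm ip (f m - f n) < e) \<longrightarrow>
        (\<exists>l. (\<lambda>n. hnorm ip (f n - l)) \<longlonglongrightarrow> 0))"

definition is_separable :: "('a::ab_group_add \<Rightarrow> 'a \<Rightarrow> complex) \<Rightarrow> bool" where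
  "is_separable ip \<longleftrightarrow>
     (\<exists>D. countable D \<and> (\<forall>x e. e > 0 \<longrightarrow> (\<exists>d\<in>D. hnorm ip (x - d) < e)))"

definition is_clinear :: "(complex \<Rightarrow> 'a::ab_group_add \<Rightarrow> 'a) \<Rightarrow> ('a \<Rightarrow> 'a) \<Rightarrow> bool" where
  "is_clinear sc A \<longleftrightarrow> (\<forall>x y. A (x + y) = A x + A y) \<and> (\<forall>c x. A (sc c x) = sc c (A x))"

definition is_bounded_op :: "('a \<Rightarrow> 'a \<Rightarrow> complex) \<Rightarrow> ('a \<Rightarrow> 'a) \<Rightarrow> bool" where
  "is_bounded_op ip A \<longleftrightarrow> (\<exists>K. \<forall>x. hnorm ip (A x) \<le> K * hnorm ip x)"

definition op_spectrum :: "(complex \<Rightarrow> 'a::ab_group_add \<Rightarrow> 'a) \<Rightarrow> ('a \<Rightarrow> 'a) \<Rightarrow> complex set" where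
  "op_spectrum sc A = {lam. \<not> bij (\<lambda>x. A x - sc lam x)}"

definition is_fs_observable ::
  "(complex \<Rightarrow> 'a::ab_group_add \<Rightarrow> 'a) \<Rightarrow> ('a \<Rightarrow> 'a \<Rightarrow> complex) \<Rightarrow> ('a \<Rightarrow> 'a) \<Rightarrow> bool" where
  "is_fs_observable sc ip A \<longleftrightarrow>
     is_clinear sc A \<and> is_bounded_op ip A \<and> (\<forall>x y. ip (A x) y = ip x (A y)) \<and>
     finite (op_spectrum sc A)"

definition is_cfunctional ::
  "(complex \<Rightarrow> 'a::ab_group_add \<Rightarrow> 'a) \<Rightarrow> ('a \<Rightarrow> 'a \<Rightarrow> complex) \<Rightarrow> ('a \<Rightarrow> complex) \<Rightarrow> bool" where
  "is_cfunctional sc ip \<eta> \<longleftrightarrow>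
     (\<forall>x y. \<eta> (x + y) = \<eta> x + \<eta> y) \<and> (\<forall>c x. \<eta> (sc c x) = c * \<eta> x) \<and>
     (\<exists>K. \<forall>x. cmod (\<eta> x) \<le> K * hnorm ip x)"

text \<open>The (algebraic) tensor product H \<otimes> H*: the elementary tensor phi \<otimes> eta is
  identified with the rank-one map x \<mapsto> eta(x) phi, so H \<otimes> H* is realised as the
  space of finite sums of such maps (a dense subspace of the Hilbert tensor product).\<close>
definition tens_space ::
  "(complex \<Rightarrow> 'a::ab_group_add \<Rightarrow> 'a) \<Rightarrow> ('a \<Rightarrow> 'a \<Rightarrow> complex) \<Rightarrow> ('a \<Rightarrow> 'a) set" where
  "tens_space sc ip =
     {X. \<exists>ps :: ('a \<times> ('a \<Rightarrow> complex)) list.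
           (\<forall>(\<phi>, \<eta>)\<in>set ps. is_cfunctional sc ip \<eta>) \<and>
           X = (\<lambda>x. sum_list (map (\<lambda>(\<phi>, \<eta>). sc (\<eta> x) \<phi>) ps))}"

text \<open>A \<otimes> B^T acts on phi \<otimes> eta as (A phi) \<otimes> (B^T eta) = (A phi) \<otimes> (eta \<circ> B),
  i.e. on the corresponding map X as A \<circ> X \<circ> B.\<close>
definition tens_op :: "('a \<Rightarrow> 'a) \<Rightarrow> ('a \<Rightarrow> 'a) \<Rightarrow> ('a \<Rightarrow> 'a) \<Rightarrow> ('a \<Rightarrow> 'a)" where
  "tens_op A B X = A \<circ> X \<circ> B"

definition tens_spectrum ::
  "(complex \<Rightarrow> 'a::ab_group_add \<Rightarrow> 'a) \<Rightarrow> ('a \<Rightarrow> 'a \<Rightarrow> complex)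
    \<Rightarrow> (('a \<Rightarrow> 'a) \<Rightarrow> ('a \<Rightarrow> 'a)) \<Rightarrow> complex set" where
  "tens_spectrum sc ip T =
     {lam. \<not> bij_betw (\<lambda>X. \<lambda>x. T X x - sc lam (X x)) (tens_space sc ip) (tens_space sc ip)}"

definition poly_op ::
  "(complex \<Rightarrow> 'a::ab_group_add \<Rightarrow> 'a) \<Rightarrow> complex poly
    \<Rightarrow> (('a \<Rightarrow> 'a) \<Rightarrow> ('a \<Rightarrow> 'a)) \<Rightarrow> ('a \<Rightarrow> 'a) \<Rightarrow> ('a \<Rightarrow> 'a)" where
  "poly_op sc q T X = (\<lambda>x. \<Sum>i\<le>degree q. sc (coeff q i) ((T ^^ i) X x))"

definition lagrange_poly :: "complex set \<Rightarrow> complex \<Rightarrow> complex poly" where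
  "lagrange_poly S lam = (\<Prod>\<mu>\<in>S - {lam}. [:- \<mu> / (lam - \<mu>), 1 / (lam - \<mu>):])"

text \<open>Functional calculus for an operator with finite spectrum:
  f(T) = \<Sum>_{lam \<in> spec T} f(lam) E_lam, with spectral projections E_lam = L_lam(T).\<close>
definition fcalc ::
  "(complex \<Rightarrow> 'a::ab_group_add \<Rightarrow> 'a) \<Rightarrow> ('a \<Rightarrow> 'a \<Rightarrow> complex) \<Rightarrow> (complex \<Rightarrow> complex)
    \<Rightarrow> (('a \<Rightarrow> 'a) \<Rightarrow> ('a \<Rightarrow> 'a)) \<Rightarrow> ('a \<Rightarrow> 'a) \<Rightarrow> ('a \<Rightarrow> 'a)" where
  "fcalc sc ip f T X =
     (\<lambda>x. \<Sum>lam\<in>tens_spectrum sc ip T.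
            sc (f lam) (poly_op sc (lagrange_poly (tens_spectrum sc ip T) lam) T X x))"

text \<open>C_{A,p} = \<Sum>_k |A_k \<otimes> I^T - I \<otimes> A_k^T|^p, as an operator on H \<otimes> H*.\<close>
definition C_op ::
  "(complex \<Rightarrow> 'a::ab_group_add \<Rightarrow> 'a) \<Rightarrow> ('a \<Rightarrow> 'a \<Rightarrow> complex) \<Rightarrow> real
    \<Rightarrow> ('a \<Rightarrow> 'a) list \<Rightarrow> ('a \<Rightarrow> 'a) \<Rightarrow> ('a \<Rightarrow> 'a)" where
  "C_op sc ip p As X =
     (\<lambda>x. sum_list (map (\<lambda>A.
        fcalc sc ip (\<lambda>lam. complex_of_real (cmod lam powr p))
          (\<lambda>Y. \<lambda>y. tens_op A id Y y - tens_op id A Y y) X x) As))"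

definition C_set ::
  "(complex \<Rightarrow> 'a::ab_group_add \<Rightarrow> 'a) \<Rightarrow> ('a \<Rightarrow> 'a \<Rightarrow> complex) \<Rightarrow> real
    \<Rightarrow> (('a \<Rightarrow> 'a) \<Rightarrow> ('a \<Rightarrow> 'a)) set" where
  "C_set sc ip p =
     {restrict (C_op sc ip p As) (tens_space sc ip) | As.
        \<forall>A\<in>set As. is_fs_observable sc ip A}"

end

theory Submission
  imports Defs "HOL-Computational_Algebra.Fundamental_Theorem_Algebra"
begin
locale hil =
  fixes sc :: "complex \<Rightarrow> 'a::ab_group_add \<Rightarrow> 'a" and ip :: "'a \<Rightarrow> 'a \<Rightarrow> complex"
  assumes H: "is_complex_hilbert sc ip"
begin

lemmas Hconj = H[unfolded is_complex_hilbert_def]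

abbreviation N where "N \<equiv> hnorm ip"

lemma sc1[simp]: "sc 1 x = x" using conjunct1[OF Hconj] by blast
lemma sc_assoc[simp]: "sc a (sc b x) = sc (a*b) x" using conjunct1[OF conjunct2[OF Hconj]] by blast
lemma sc_add_right: "sc a (x + y) = sc a x + sc a y" using conjunct1[OF conjunct2[OF conjunct2[OF Hconj]]] by blast
lemma sc_add_left: "sc (a + b) x = sc a x + sc b x" using conjunct1[OF conjunct2[OF conjunct2[OF conjunct2[OF Hconj]]]] by blast
lemma ip_cnj: "ip x y = cnj (ip y x)" using conjunct1[OF conjunct2[OF conjunct2[OF conjunct2[OF conjunct2[OF Hconj]]]]] by blast
lemma ip_add_right: "ip x (y + z) = ip x y + ip x z" using conjunct1[OF conjunct2[OF conjunct2[OF conjunct2[OF conjunct2[OF conjunct2[OF Hconj]]]]]] by blast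
lemma ip_sc_right[simp]: "ip x (sc a y) = a * ip x y" using conjunct1[OF conjunct2[OF conjunct2[OF conjunct2[OF conjunct2[OF conjunct2[OF conjunct2[OF Hconj]]]]]]] by blast
lemma ip_nonneg: "0 \<le> Re (ip x x)" using conjunct1[OF conjunct2[OF conjunct2[OF conjunct2[OF conjunct2[OF conjunct2[OF conjunct2[OF conjunct2[OF Hconj]]]]]]]] by blast
lemma ip_zero: "ip x x = 0 \<Longrightarrow> x = 0" using conjunct1[OF conjunct2[OF conjunct2[OF conjunct2[OF conjunct2[OF conjunct2[OF conjunct2[OF conjunct2[OF conjunct2[OF Hconj]]]]]]]]] by blast
lemma complete: "(\<forall>e>0. \<exists>N. \<forall>m\<ge>N. \<forall>n\<ge>N. hnorm ip (f m - f n) < e) \<Longrightarrow>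
        (\<exists>l. (\<lambda>n. hnorm ip (f n - l)) \<longlonglongrightarrow> 0)" using conjunct2[OF conjunct2[OF conjunct2[OF conjunct2[OF conjunct2[OF conjunct2[OF conjunct2[OF conjunct2[OF conjunct2[OF Hconj]]]]]]]]] by blast

lemma sc0[simp]: "sc 0 x = 0"
proof -
  have "sc 0 x = sc 0 x + sc 0 x" using sc_add_left[of 0 0 x] by simp
  thus ?thesis by simp
qed
lemma sc_0[simp]: "sc a 0 = 0"
proof -
  have "sc a 0 = sc a 0 + sc a 0" using sc_add_right[of a 0 0] by simp
  thus ?thesis by simp
qed
lemma sc_minus_right: "sc a (- x) = - sc a x"
  using sc_add_right[of a x "-x"] by (simp add: eq_neg_iff_add_eq_0 add.commute)
lemma sc_diff_right: "sc a (x - y) = sc a x - sc a y"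
  by (metis diff_conv_add_uminus sc_add_right sc_minus_right)
lemma sc_minus_left: "sc (- a) x = - sc a x"
  using sc_add_left[of a "-a" x] by (simp add: eq_neg_iff_add_eq_0 add.commute)
lemma sc_diff_left: "sc (a - b) x = sc a x - sc b x"
  by (metis diff_conv_add_uminus sc_add_left sc_minus_left)
lemma sc_sum_right: "sc a (sum f A) = (\<Sum>i\<in>A. sc a (f i))"
  by (induction A rule: infinite_finite_induct) (auto simp: sc_add_right)
lemma sc_sum_left: "sc (sum f A) x = (\<Sum>i\<in>A. sc (f i) x)"
  by (induction A rule: infinite_finite_induct) (auto simp: sc_add_left)
lemma sc_m1: "sc (-1) x = - x" using sc_minus_left[of 1 x] by simp

lemma ip_add_left: "ip (x + y) z = ip x z + ip y z"
  by (metis complex_cnj_add ip_add_right ip_cnj)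
lemma ip_sc_left[simp]: "ip (sc a x) y = cnj a * ip x y"
  by (metis complex_cnj_cnj complex_cnj_mult ip_cnj ip_sc_right)
lemma ip_0_right[simp]: "ip x 0 = 0" using ip_sc_right[of x 0 0] by simp
lemma ip_0_left[simp]: "ip 0 x = 0" using ip_sc_left[of 0 0 x] by simp
lemma ip_minus_right: "ip x (- y) = - ip x y"
  using ip_add_right[of x y "-y"] by (simp add: eq_neg_iff_add_eq_0 add.commute)
lemma ip_minus_left: "ip (- x) y = - ip x y"
  using ip_add_left[of x "-x" y] by (simp add: eq_neg_iff_add_eq_0 add.commute)
lemma ip_diff_right: "ip x (y - z) = ip x y - ip x z"
  by (metis diff_conv_add_uminus ip_add_right ip_minus_right)
lemma ip_diff_left: "ip (x - y) z = ip x z - ip y z"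
  by (metis diff_conv_add_uminus ip_add_left ip_minus_left)
lemma ip_sum_right: "ip x (sum f A) = (\<Sum>i\<in>A. ip x (f i))"
  by (induction A rule: infinite_finite_induct) (auto simp: ip_add_right)
lemma ip_sum_left: "ip (sum f A) x = (\<Sum>i\<in>A. ip (f i) x)"
  by (induction A rule: infinite_finite_induct) (auto simp: ip_add_left)
lemma ip_self_Im: "Im (ip x x) = 0"
proof -
  have "Im (ip x x) = Im (cnj (ip x x))" by (metis ip_cnj)
  thus ?thesis by simp
qed
lemma ip_self_real: "ip x x = complex_of_real (Re (ip x x))"
  using ip_self_Im complex_eq_iff by auto

lemma N_sq: "(N x)^2 = Re (ip x x)"
  unfolding hnorm_def using ip_nonneg by simp
lemma N_nonneg[simp]: "N x \<ge> 0" unfolding hnorm_def using ip_nonneg by simp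
lemma N_zero_iff[simp]: "N x = 0 \<longleftrightarrow> x = 0"
proof
  assume "N x = 0" then have "Re (ip x x) = 0" using N_sq[of x] by simp
  then have "ip x x = 0" by (metis ip_self_real of_real_0)
  thus "x = 0" by (rule ip_zero)
qed (simp add: hnorm_def)
lemma N_0[simp]: "N 0 = 0" by simp
lemma ip_self_N: "ip x x = complex_of_real ((N x)^2)"
  by (metis ip_self_real N_sq)

lemma N_sc: "N (sc a x) = cmod a * N x"
proof -
  have "ip (sc a x) (sc a x) = cnj a * a * ip x x" by simp
  also have "cnj a * a = complex_of_real ((cmod a)^2)"
    by (metis complex_norm_square mult.commute of_real_power)
  finally have "Re (ip (sc a x) (sc a x)) = (cmod a)^2 * Re (ip x x)"
    by (metis Re_complex_of_real ip_self_real of_real_mult)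
  thus ?thesis unfolding hnorm_def by (simp add: real_sqrt_mult)
qed
lemma N_minus: "N (- x) = N x" using N_sc[of "-1" x] by (simp add: sc_m1)
lemma N_commute: "N (x - y) = N (y - x)" by (metis N_minus minus_diff_eq)

lemma cauchy_schwarz: "cmod (ip x y) \<le> N x * N y"
proof (cases "x = 0")
  case True thus ?thesis by simp
next
  case False
  define a where "a = (N x)^2"
  have a: "a > 0" using False a_def by simp
  have ax: "ip x x = complex_of_real a" using ip_self_N a_def by simp
  define t where "t = ip x y / complex_of_real a"
  define z where "z = y - sc t x"
  have wn: "ip x y * cnj (ip x y) = complex_of_real ((cmod (ip x y))^2)"
    by (metis complex_norm_square of_real_power)
  have "ip z z = ip y y - t * ip y x - cnj t * ip x y + cnj t * t * ip x x"
    unfolding z_def by (simp add: ip_diff_left ip_diff_right algebra_simps)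
  also have "ip y x = cnj (ip x y)" using ip_cnj by blast
  also have "cnj t * t * ip x x = complex_of_real (cmod (ip x y) ^2 / a)"
    unfolding t_def ax using a wn
    by (simp add: field_simps power2_eq_square)
  also have "t * cnj (ip x y) = complex_of_real (cmod (ip x y) ^2 / a)"
    unfolding t_def using a wn by (simp add: field_simps)
  also have "cnj t * ip x y = complex_of_real (cmod (ip x y) ^2 / a)"
    unfolding t_def using a wn by (simp add: field_simps mult.commute)
  finally have "ip z z = ip y y - complex_of_real (cmod (ip x y) ^2 / a)" by simp
  hence "Re (ip z z) = (N y)^2 - cmod (ip x y) ^2 / a" using N_sq by simp
  hence "cmod (ip x y) ^2 / a \<le> (N y)^2" using ip_nonneg[of z] by simp
  hence "cmod (ip x y) ^2 \<le> (N x * N y)^2" using a unfolding a_def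
    by (simp add: field_simps power_mult_distrib)
  thus ?thesis by (meson N_nonneg mult_nonneg_nonneg power2_le_imp_le)
qed

lemma N_triangle: "N (x + y) \<le> N x + N y"
proof -
  have "ip (x+y) (x+y) = ip x x + ip x y + ip y x + ip y y"
    by (simp add: ip_add_left ip_add_right)
  hence "Re (ip (x+y) (x+y)) = (N x)^2 + (N y)^2 + Re (ip x y + ip y x)"
    using N_sq by simp
  also have "Re (ip x y + ip y x) = 2 * Re (ip x y)"
    using ip_cnj[of y x] by simp
  also have "\<dots> \<le> 2 * (N x * N y)"
    using cauchy_schwarz[of x y] complex_Re_le_cmod[of "ip x y"] by linarith
  finally have "(N (x+y))^2 \<le> (N x + N y)^2" using N_sq by (simp add: power2_sum)
  thus ?thesis by (meson N_nonneg add_nonneg_nonneg power2_le_imp_le)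
qed
lemma N_triangle_diff: "N (x - z) \<le> N (x - y) + N (y - z)"
  using N_triangle[of "x - y" "y - z"] by simp
lemma N_sum: "N (sum f A) \<le> (\<Sum>i\<in>A. N (f i))"
  by (induction A rule: infinite_finite_induct) (auto intro: order_trans[OF N_triangle])

end

context hil begin

definition sa :: "('a \<Rightarrow> 'a) \<Rightarrow> bool" where
  "sa A \<longleftrightarrow> (\<forall>x y. ip (A x) y = ip x (A y))"

lemma lin_add: "is_clinear sc A \<Longrightarrow> A (x + y) = A x + A y" unfolding is_clinear_def by blast
lemma lin_sc: "is_clinear sc A \<Longrightarrow> A (sc c x) = sc c (A x)" unfolding is_clinear_def by blast
lemma lin_0: "is_clinear sc A \<Longrightarrow> A 0 = 0" using lin_sc[of A 0 0] by simp
lemma lin_minus: "is_clinear sc A \<Longrightarrow> A (- x) = - A x"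
  using lin_sc[of A "-1" x] by (simp add: sc_m1)
lemma lin_diff: "is_clinear sc A \<Longrightarrow> A (x - y) = A x - A y"
  by (metis diff_conv_add_uminus lin_add lin_minus)
lemma lin_sum: "is_clinear sc A \<Longrightarrow> A (sum f S) = (\<Sum>i\<in>S. A (f i))"
  by (induction S rule: infinite_finite_induct) (auto simp: lin_0 lin_add)

lemma N_pos_iff[simp]: "0 < N x \<longleftrightarrow> x \<noteq> 0"
  by (metis N_nonneg N_zero_iff less_eq_real_def not_less)

lemma sa_D: "sa A \<Longrightarrow> ip (A x) y = ip x (A y)" unfolding sa_def by blast

lemma real_sc_ip: "ip (sc (complex_of_real r) x) y = complex_of_real r * ip x y" by simp

lemma bounded_below:
  assumes lin: "is_clinear sc D" and sa: "sa D" and su: "surj D"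
  shows "\<exists>c>0. \<forall>x. c * N x \<le> N (D x)"
proof (rule ccontr)
  assume nb: "\<not> ?thesis"
  have big: "\<exists>z. N (D z) \<le> 1 \<and> M \<le> N z" if M: "M > 0" for M
  proof -
    from nb M obtain x where x: "(1/M) * N x > N (D x)"
      by (metis divide_pos_pos not_le zero_less_one)
    have xn: "N x > 0" using x N_nonneg[of "D x"] M
      by (metis N_nonneg divide_pos_pos less_eq_real_def mult_eq_0_iff not_le zero_less_one)
    have x0: "x \<noteq> 0" using xn by (metis N_0 less_irrefl)
    define z where "z = sc (complex_of_real (M / N x)) x"
    have "N z = M" unfolding z_def using xn M x0 by (simp add: N_sc norm_divide)
    moreover have "N (D z) = M / N x * N (D x)" unfolding z_def using xn M
      by (simp add: lin_sc[OF lin] N_sc norm_divide)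
    moreover have "M / N x * N (D x) \<le> 1" using x xn M by (simp add: field_simps)
    ultimately show ?thesis by (metis order_refl)
  qed
  have "\<forall>n. \<exists>z. N (D z) \<le> 1 \<and> 4^n \<le> N z" using big by simp
  then obtain z where z1: "\<And>n. N (D (z n)) \<le> 1" and z2: "\<And>n. (4::real)^n \<le> N (z n)"
    by metis
  have zpos: "N (z n) > 0" for n using z2[of n] by (smt (verit) zero_less_power)
  define r where "r = (\<lambda>n::nat. (1/3::real)^n)"
  define v where "v = (\<lambda>n. sc (complex_of_real (r n / N (z n))) (z n))"
  define xs where "xs = rec_nat 0 (\<lambda>n xn. if cmod (ip (z (Suc n)) (xn + v (Suc n))) \<ge> r (Suc n) * N (z (Suc n))
                 then xn + v (Suc n) else xn - v (Suc n))"
  have xs0: "xs 0 = 0" unfolding xs_def by simp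
  have xsS: "xs (Suc n) = (if cmod (ip (z (Suc n)) (xs n + v (Suc n))) \<ge> r (Suc n) * N (z (Suc n))
                 then xs n + v (Suc n) else xs n - v (Suc n))" for n unfolding xs_def by simp
  have Nv: "N (v n) = r n" for n
  proof -
    have "N (v n) = \<bar>r n / N (z n)\<bar> * N (z n)" unfolding v_def by (simp only: N_sc norm_of_real)
    also have "\<dots> = r n" using zpos[of n] by (simp add: r_def)
    finally show ?thesis .
  qed
  have ipv: "ip (z n) (v n) = complex_of_real (r n * N (z n))" for n
  proof -
    have "ip (z n) (v n) = complex_of_real (r n / N (z n)) * complex_of_real ((N (z n))^2)"
      unfolding v_def by (simp only: ip_sc_right ip_self_N)
    also have "\<dots> = complex_of_real (r n * N (z n))" using zpos[of n]
      by (simp only: of_real_mult[symmetric]) (simp add: power2_eq_square)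
    finally show ?thesis .
  qed
  have step: "N (xs (Suc n) - xs n) = r (Suc n)" for n
    using Nv[of "Suc n"] by (simp add: xsS N_minus)
  have lower: "cmod (ip (z (Suc n)) (xs (Suc n))) \<ge> r (Suc n) * N (z (Suc n))" for n
  proof -
    let ?a = "ip (z (Suc n)) (xs n)" and ?b = "complex_of_real (r (Suc n) * N (z (Suc n)))"
    have e1: "ip (z (Suc n)) (xs n + v (Suc n)) = ?a + ?b" using ipv by (simp add: ip_add_right)
    have e2: "ip (z (Suc n)) (xs n - v (Suc n)) = ?a - ?b" using ipv by (simp add: ip_diff_right)
    have "cmod (2 * ?b) \<le> cmod (?a + ?b) + cmod (?a - ?b)"
      using norm_triangle_ineq4[of "?a + ?b" "?a - ?b"] by simp
    moreover have "cmod (2 * ?b) = 2 * (r (Suc n) * N (z (Suc n)))"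
    proof -
      have "2 * ?b = complex_of_real (2 * (r (Suc n) * N (z (Suc n))))" by simp
      hence "cmod (2 * ?b) = \<bar>2 * (r (Suc n) * N (z (Suc n)))\<bar>" by (simp only: norm_of_real)
      thus ?thesis using zpos[of "Suc n"] by (simp add: r_def)
    qed
    ultimately show ?thesis using e1 e2 by (auto simp: xsS)
  qed
  have tail: "N (xs m - xs n) \<le> (r n - r m) / 2" if "n \<le> m" for n m
    using that
  proof (induction m rule: dec_induct)
    case base then show ?case by simp
  next
    case (step m)
    have r3: "r (Suc m) = r m / 3" by (simp add: r_def)
    have "N (xs (Suc m) - xs n) \<le> N (xs (Suc m) - xs m) + N (xs m - xs n)" by (rule N_triangle_diff)
    also have "\<dots> \<le> r (Suc m) + (r n - r m) / 2" using step.IH \<open>\<And>n. N (xs (Suc n) - xs n) = r (Suc n)\<close> by simp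
    also have "\<dots> = (r n - r (Suc m)) / 2" using r3 by (simp add: field_simps)
    finally show ?case .
  qed
  have rpos: "r n > 0" for n by (simp add: r_def)
  have tail2: "N (xs m - xs n) \<le> r n / 2" if "n \<le> m" for n m
  proof -
    have "(r n - r m)/2 \<le> r n/2" using rpos[of m] by simp
    with tail[OF that] show ?thesis by (rule order_trans)
  qed
  have "\<forall>e>0. \<exists>K. \<forall>m\<ge>K. \<forall>n\<ge>K. N (xs m - xs n) < e"
  proof (intro allI impI)
    fix e :: real assume e: "e > 0"
    obtain K where K: "(1/3::real)^K < e" using real_arch_pow_inv[of e "1/3"] e by auto
    show "\<exists>K. \<forall>m\<ge>K. \<forall>n\<ge>K. N (xs m - xs n) < e"
    proof (intro exI allI impI)
      fix m n assume "K \<le> m" "K \<le> n"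
      have "N (xs m - xs n) \<le> N (xs m - xs K) + N (xs K - xs n)" by (rule N_triangle_diff)
      also have "\<dots> \<le> r K / 2 + r K / 2" using tail2[OF \<open>K \<le> m\<close>] tail2[OF \<open>K \<le> n\<close>]
        by (simp add: N_commute[of "xs K"])
      finally show "N (xs m - xs n) < e" using K by (simp add: r_def)
    qed
  qed
  from complete[OF this] obtain l where l: "(\<lambda>n. N (xs n - l)) \<longlonglongrightarrow> 0" by blast
  have lim_bound: "N (xs n - l) \<le> r n / 2" for n
  proof (rule field_le_epsilon)
    fix e :: real assume e: "e > 0"
    from l e have "eventually (\<lambda>m. N (xs m - l) < e) sequentially"
      by (simp add: order_tendstoD(2))
    then obtain K where K: "\<forall>m\<ge>K. N (xs m - l) < e" by (auto simp: eventually_sequentially)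
    define m where "m = max n K"
    have m: "m \<ge> n" "N (xs m - l) < e" using K unfolding m_def by auto
    have "N (xs n - l) \<le> N (xs n - xs m) + N (xs m - l)" by (rule N_triangle_diff)
    also have "\<dots> \<le> r n / 2 + e" using tail2[OF m(1)] m(2) by (simp add: N_commute[of "xs n"])
    finally show "N (xs n - l) \<le> r n / 2 + e" .
  qed
  obtain u where u: "D u = l" using su by (metis surj_def)
  have contra: "(4/3::real)^(Suc n) / 2 \<le> N u" for n
  proof -
    let ?w = "z (Suc n)"
    have "cmod (ip ?w (xs (Suc n))) \<le> cmod (ip ?w l) + cmod (ip ?w (xs (Suc n) - l))"
      using norm_triangle_ineq[of "ip ?w l" "ip ?w (xs (Suc n) - l)"] by (simp add: ip_diff_right)
    also have "cmod (ip ?w (xs (Suc n) - l)) \<le> N ?w * (r (Suc n) / 2)"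
      using cauchy_schwarz[of ?w "xs (Suc n) - l"] lim_bound[of "Suc n"] zpos[of "Suc n"]
      by (meson mult_left_mono N_nonneg order_trans)
    finally have "r (Suc n) * N ?w - N ?w * (r (Suc n) / 2) \<le> cmod (ip ?w l)"
      using lower[of n] by linarith
    hence A: "r (Suc n) * N ?w / 2 \<le> cmod (ip ?w l)" by simp
    have "cmod (ip ?w l) = cmod (ip (D ?w) u)" using u sa_D[OF sa] by simp
    also have "\<dots> \<le> N (D ?w) * N u" by (rule cauchy_schwarz)
    also have "\<dots> \<le> N u" using z1[of "Suc n"] N_nonneg[of u] by (simp add: mult_left_le_one_le)
    finally have B: "r (Suc n) * N ?w / 2 \<le> N u" using A by linarith
    have "(4/3::real)^(Suc n) = r (Suc n) * 4^(Suc n)" by (simp add: r_def power_mult_distrib[symmetric])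
    also have "\<dots> \<le> r (Suc n) * N ?w" using z2[of "Suc n"] rpos[of "Suc n"] by simp
    finally show ?thesis using B by linarith
  qed
  obtain n where "2 * N u < (4/3::real)^n" using real_arch_pow[of "4/3" "2 * N u"] by auto
  moreover have "(4/3::real)^n \<le> (4/3)^(Suc n)" by simp
  ultimately show False using contra[of n] by linarith
qed

end

context hil begin

lemma zero_spectrum:
  assumes lin: "is_clinear sc B" and bnd: "is_bounded_op ip B" and sa: "sa B"
    and su: "\<And>\<mu>. \<mu> \<noteq> 0 \<Longrightarrow> surj (\<lambda>x. B x - sc \<mu> x)"
  shows "B x = 0"
proof -
  obtain K where K: "\<And>x. N (B x) \<le> K * N x" using bnd unfolding is_bounded_op_def by blast
  define S where "S = {N (B x) | x. N x \<le> 1}"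
  have S0: "0 \<in> S" unfolding S_def using lin_0[OF lin] by (auto intro!: exI[of _ 0])
  have bdd: "bdd_above S"
  proof (rule bdd_aboveI)
    fix s assume "s \<in> S"
    then obtain y where y: "s = N (B y)" "N y \<le> 1" unfolding S_def by blast
    have "K * N y \<le> \<bar>K\<bar> * N y" by (rule mult_right_mono) auto
    also have "\<bar>K\<bar> * N y \<le> \<bar>K\<bar>" using y(2) by (simp add: mult_left_le)
    finally have "K * N y \<le> \<bar>K\<bar>" .
    thus "s \<le> \<bar>K\<bar>" using K[of y] y(1) by linarith
  qed
  define M where "M = Sup S"
  have M0: "M \<ge> 0" unfolding M_def using S0 bdd by (rule cSup_upper)
  have normM: "N (B y) \<le> M * N y" for y
  proof (cases "y = 0")
    case True thus ?thesis using lin_0[OF lin] by simp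
  next
    case False
    define u where "u = sc (complex_of_real (1 / N y)) y"
    have "N u = \<bar>1 / N y\<bar> * N y" unfolding u_def by (simp only: N_sc norm_of_real)
    hence "N u = 1" using False by simp
    hence "N (B u) \<in> S" unfolding S_def by auto
    hence "N (B u) \<le> M" unfolding M_def using bdd by (rule cSup_upper)
    moreover have "N (B u) = \<bar>1 / N y\<bar> * N (B y)" unfolding u_def
      by (simp only: lin_sc[OF lin] N_sc norm_of_real)
    ultimately have "N (B y) / N y \<le> M" using False by simp
    thus ?thesis using False by (simp add: divide_le_eq mult.commute)
  qed
  show ?thesis
  proof (cases "M = 0")
    case True thus ?thesis using normM[of x] N_nonneg[of "B x"] N_zero_iff[of "B x"] by simp
  next
    case False
    hence Mp: "M > 0" using M0 by simp
    define m where "m = complex_of_real (M^2)"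
    define D where "D = (\<lambda>x. sc m x - B (B x))"
    have linD: "is_clinear sc D" unfolding is_clinear_def D_def
      using lin_add[OF lin] lin_sc[OF lin]
      by (auto simp: sc_add_right sc_diff_right mult.commute)
    have saD: "sa D" unfolding sa_def D_def
      by (auto simp: ip_diff_left ip_diff_right m_def sa_D[OF sa])
    have suD: "surj D"
    proof (rule surjI)
      fix t
      have "surj (\<lambda>x. B x - sc (complex_of_real M) x)" using su Mp by simp
      then obtain u where u: "- t = B u - sc (complex_of_real M) u"
        unfolding surj_def by blast
      have "surj (\<lambda>x. B x - sc (- complex_of_real M) x)" using su Mp by simp
      then obtain y where y: "u = B y - sc (- complex_of_real M) y"
        unfolding surj_def by blast
      have uy: "u = B y + sc (complex_of_real M) y" using y by (simp add: sc_minus_left)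
      note u = u[symmetric]
      have "B u - sc (complex_of_real M) u = B (B y) - sc m y"
        unfolding uy m_def using lin_add[OF lin] lin_sc[OF lin]
        by (simp add: sc_add_right power2_eq_square)
      hence "D y = t" using u unfolding D_def by (metis minus_diff_eq neg_equal_iff_equal)
      thus "D (SOME y. D y = t) = t" by (rule someI)
    qed
    obtain c where c: "c > 0" "\<And>x. c * N x \<le> N (D x)" using bounded_below[OF linD saD suD] by blast
    define \<delta> where "\<delta> = min (M/2) (c^2 / (16 * M^3))"
    have dpos: "\<delta> > 0" unfolding \<delta>_def using Mp c by simp
    have "M - \<delta> < Sup S" unfolding M_def[symmetric] using dpos by simp
    then obtain s where "s \<in> S" "M - \<delta> < s" using less_cSup_iff[OF _ bdd] S0 by blast
    then obtain y where y: "N y \<le> 1" "M - \<delta> < N (B y)" unfolding S_def by blast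
    have s1: "ip y (B (B y)) = complex_of_real ((N (B y))^2)"
      using sa_D[OF sa, of y "B y"] ip_self_N[of "B y"] by simp
    have s2: "ip (B (B y)) y = complex_of_real ((N (B y))^2)"
      using sa_D[OF sa, of "B y" y] ip_self_N[of "B y"] by simp
    have "ip (D y) (D y) = cnj m * (m * ip y y) - cnj m * ip y (B (B y)) - m * ip (B (B y)) y
        + ip (B (B y)) (B (B y))"
      unfolding D_def by (simp add: ip_diff_left ip_diff_right algebra_simps)
    also have "\<dots> = complex_of_real (M^4 * (N y)^2 - 2 * M^2 * (N (B y))^2 + (N (B (B y)))^2)"
      unfolding s1 s2 ip_self_N m_def by (simp add: algebra_simps)
    finally have eD0: "ip (D y) (D y) = complex_of_real (M^4 * (N y)^2 - 2 * M^2 * (N (B y))^2 + (N (B (B y)))^2)" .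
    have eD: "(N (D y))^2 = M^4 * (N y)^2 - 2 * M^2 * (N (B y))^2 + (N (B (B y)))^2"
      using eD0 by (simp only: ip_self_N of_real_eq_iff)
    have "N (B (B y)) \<le> M * N (B y)" by (rule normM)
    hence "(N (B (B y)))^2 \<le> M^2 * (N (B y))^2"
      by (metis N_nonneg power2_le_imp_le power_mono power_mult_distrib)
    moreover have "(N y)^2 \<le> 1" using y(1) N_nonneg[of y] by (simp add: power_le_one)
    moreover have "M^4 * (N y)^2 \<le> M^4 * 1" using \<open>(N y)^2 \<le> 1\<close> Mp
      by (intro mult_left_mono) auto
    ultimately have "(N (D y))^2 \<le> M^4 - M^2 * (N (B y))^2" using eD
      by (simp add: algebra_simps)
    moreover have "M - \<delta> \<ge> 0" unfolding \<delta>_def using Mp by simp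
    hence "(M - \<delta>)^2 \<le> (N (B y))^2" using y(2) by (simp add: power_mono)
    hence "M^2 * (M - \<delta>)^2 \<le> M^2 * (N (B y))^2" by (intro mult_left_mono) auto
    ultimately have "(N (D y))^2 \<le> M^4 - M^2 * (M - \<delta>)^2"
      by linarith
    also have "\<dots> = M^2 * (2 * M * \<delta> - \<delta>^2)" by (simp add: algebra_simps power2_eq_square power4_eq_xxxx)
    also have "\<dots> \<le> M^2 * (2 * M * \<delta>)" using dpos by (simp add: mult_left_mono)
    also have "\<dots> \<le> M^2 * (2 * M * (c^2 / (16 * M^3)))" unfolding \<delta>_def using Mp
      by (intro mult_left_mono) auto
    also have "\<dots> = c^2 / 8" using Mp by (simp add: field_simps power2_eq_square power3_eq_cube)
    finally have up: "(N (D y))^2 \<le> c^2 / 8" .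
    have "N (B y) \<le> M * N y" by (rule normM)
    moreover have "M / 2 \<le> M - \<delta>" unfolding \<delta>_def by simp
    ultimately have "M / 2 < M * N y" using y(2) by linarith
    hence "1/2 < N y" using Mp by (simp add: field_simps)
    hence "c * (1/2) \<le> c * N y" using c(1) by (intro mult_left_mono) auto
    hence "c / 2 \<le> N (D y)" using c(2)[of y] by simp
    hence "(c/2)^2 \<le> (N (D y))^2" using c(1) by (simp add: power_mono)
    moreover have "(c/2)^2 = c^2/4" by (simp add: power2_eq_square)
    moreover have "c^2 > 0" using c(1) by simp
    ultimately have False using up by linarith
    thus ?thesis ..
  qed
qed

end

context hil begin

definition opoly :: "complex poly \<Rightarrow> ('a \<Rightarrow> 'a) \<Rightarrow> 'a \<Rightarrow> 'a" where
  "opoly q A x = (\<Sum>i\<le>degree q. sc (coeff q i) ((A^^i) x))"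

lemma opoly_bound: "degree q \<le> n \<Longrightarrow> opoly q A x = (\<Sum>i\<le>n. sc (coeff q i) ((A^^i) x))"
proof -
  assume d: "degree q \<le> n"
  have "(\<Sum>i\<le>n. sc (coeff q i) ((A^^i) x)) = (\<Sum>i\<le>degree q. sc (coeff q i) ((A^^i) x))"
    by (rule sum.mono_neutral_right) (use d in \<open>auto simp: coeff_eq_0\<close>)
  thus ?thesis unfolding opoly_def by simp
qed

lemma op_pCons: assumes lin: "is_clinear sc A"
  shows "opoly (pCons a p) A x = sc a x + A (opoly p A x)"
proof -
  have "opoly (pCons a p) A x = (\<Sum>i\<le>Suc (degree p). sc (coeff (pCons a p) i) ((A^^i) x))"
    by (rule opoly_bound) (simp add: degree_pCons_le)
  also have "\<dots> = sc a x + (\<Sum>i\<le>degree p. sc (coeff p i) (A ((A^^i) x)))"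
    unfolding sum.atMost_Suc_shift by simp
  also have "\<dots> = sc a x + A (opoly p A x)" unfolding opoly_def
    by (simp add: lin_sum[OF lin] lin_sc[OF lin])
  finally show ?thesis .
qed

lemma op_0[simp]: "opoly 0 A x = 0" unfolding opoly_def by simp
lemma op_const: "opoly [:c:] A x = sc c x" unfolding opoly_def by simp
lemma op_1: "opoly 1 A x = x" using op_const[of 1 A x] by (simp add: one_pCons)

lemma op_add: "opoly (p + q) A x = opoly p A x + opoly q A x"
proof -
  let ?n = "max (degree p) (degree q)"
  have "opoly (p + q) A x = (\<Sum>i\<le>?n. sc (coeff (p + q) i) ((A^^i) x))"
    by (rule opoly_bound) (rule degree_add_le_max)
  also have "\<dots> = (\<Sum>i\<le>?n. sc (coeff p i) ((A^^i) x)) + (\<Sum>i\<le>?n. sc (coeff q i) ((A^^i) x))"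
    by (simp add: sc_add_left sum.distrib)
  also have "\<dots> = opoly p A x + opoly q A x"
    by (simp add: opoly_bound[symmetric])
  finally show ?thesis .
qed

lemma op_smult: "opoly (smult c p) A x = sc c (opoly p A x)"
proof -
  have "opoly (smult c p) A x = (\<Sum>i\<le>degree p. sc (coeff (smult c p) i) ((A^^i) x))"
    by (rule opoly_bound) (rule degree_smult_le)
  thus ?thesis unfolding opoly_def by (simp add: sc_sum_right)
qed

lemma op_minus: "opoly (- p) A x = - opoly p A x"
  using op_add[of p "-p" A x] by (simp add: eq_neg_iff_add_eq_0 add.commute)

lemma op_diff: "opoly (p - q) A x = opoly p A x - opoly q A x"
  by (metis diff_conv_add_uminus op_add op_minus)

lemma op_sum: "opoly (\<Sum>i\<in>S. p i) A x = (\<Sum>i\<in>S. opoly (p i) A x)"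
  by (induction S rule: infinite_finite_induct) (auto simp: op_add)

lemma op_mult: assumes lin: "is_clinear sc A"
  shows "opoly (p * q) A x = opoly p A (opoly q A x)"
proof (induction p rule: pCons_induct)
  case 0 thus ?case by simp
next
  case (pCons a p)
  have "opoly (pCons a p * q) A x = opoly (smult a q) A x + opoly (pCons 0 (p * q)) A x"
    by (simp add: op_add)
  also have "\<dots> = sc a (opoly q A x) + A (opoly p A (opoly q A x))"
    by (simp add: op_smult op_pCons[OF lin] pCons.IH)
  also have "\<dots> = opoly (pCons a p) A (opoly q A x)" by (simp add: op_pCons[OF lin])
  finally show ?case .
qed

lemma op_lin: assumes lin: "is_clinear sc A" shows "is_clinear sc (opoly p A)"
proof (induction p rule: pCons_induct)
  case 0 thus ?case by (simp add: is_clinear_def)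
next
  case (pCons a p)
  show ?case unfolding is_clinear_def op_pCons[OF lin]
    using lin_add[OF pCons.IH] lin_sc[OF pCons.IH] lin_add[OF lin] lin_sc[OF lin]
    by (simp add: sc_add_right mult.commute)
qed

lemma op_X: assumes lin: "is_clinear sc A" shows "opoly [:- z, 1:] A x = A x - sc z x"
  by (simp add: op_pCons[OF lin] op_const sc_minus_left lin_0[OF lin])

lemma op_X0: assumes lin: "is_clinear sc A" shows "opoly [:0, 1:] A x = A x"
  by (simp add: op_pCons[OF lin] op_const lin_0[OF lin])

lemma op_comm: assumes lin: "is_clinear sc A" shows "opoly p A (A x) = A (opoly p A x)"
proof -
  have "opoly (p * [:0,1:]) A x = opoly ([:0,1:] * p) A x" by (simp add: mult.commute)
  thus ?thesis by (simp only: op_mult[OF lin] op_X0[OF lin])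
qed

lemma op_bnd: assumes lin: "is_clinear sc A" and bnd: "is_bounded_op ip A"
  shows "is_bounded_op ip (opoly p A)"
proof -
  obtain K0 where K0: "\<And>x. N (A x) \<le> K0 * N x" using bnd unfolding is_bounded_op_def by blast
  define K where "K = max K0 0"
  have K: "N (A x) \<le> K * N x" for x using K0[of x] N_nonneg[of x] unfolding K_def
    by (meson max.cobounded1 mult_right_mono order_trans)
  have K0': "K \<ge> 0" unfolding K_def by simp
  show ?thesis unfolding is_bounded_op_def
  proof (induction p rule: pCons_induct)
    case 0 thus ?case by (auto intro!: exI[of _ 0])
  next
    case (pCons a p)
    then obtain Kp where Kp: "\<And>x. N (opoly p A x) \<le> Kp * N x" by blast
    show ?case
    proof (intro exI allI)
      fix x
      have "N (opoly (pCons a p) A x) \<le> N (sc a x) + N (A (opoly p A x))"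
        unfolding op_pCons[OF lin] by (rule N_triangle)
      also have "\<dots> \<le> cmod a * N x + K * (Kp * N x)"
        using K[of "opoly p A x"] Kp[of x] K0' by (simp add: N_sc) (meson mult_left_mono order_trans)
      also have "\<dots> = (cmod a + K * Kp) * N x" by (simp add: algebra_simps)
      finally show "N (opoly (pCons a p) A x) \<le> (cmod a + K * Kp) * N x" .
    qed
  qed
qed

lemma op_adj: assumes lin: "is_clinear sc A" and sa: "sa A"
  shows "ip (opoly p A x) y = ip x (opoly (map_poly cnj p) A y)"
proof (induction p arbitrary: x y rule: pCons_induct)
  case 0 thus ?case by simp
next
  case (pCons a p)
  have "ip (opoly (pCons a p) A x) y = cnj a * ip x y + ip (A (opoly p A x)) y"
    by (simp add: op_pCons[OF lin] ip_add_left)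
  also have "ip (A (opoly p A x)) y = ip (opoly p A x) (A y)" by (rule sa_D[OF sa])
  also have "\<dots> = ip x (opoly (map_poly cnj p) A (A y))" by (rule pCons.IH)
  also have "\<dots> = ip x (A (opoly (map_poly cnj p) A y))" by (simp add: op_comm[OF lin])
  also have "cnj a * ip x y + ip x (A (opoly (map_poly cnj p) A y)) =
      ip x (opoly (map_poly cnj (pCons a p)) A y)"
    by (simp add: map_poly_pCons op_pCons[OF lin] ip_add_right)
  finally show ?case .
qed

lemma op_surj:
  assumes lin: "is_clinear sc A"
  shows "s \<noteq> 0 \<Longrightarrow> (\<And>z. poly s z = 0 \<Longrightarrow> bij (\<lambda>x. A x - sc z x)) \<Longrightarrow> surj (opoly s A)"
proof (induction "degree s" arbitrary: s rule: less_induct)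
  case less
  show ?case
  proof (cases "degree s = 0")
    case True
    have c: "coeff s 0 \<noteq> 0" using less.prems(1) True leading_coeff_0_iff by fastforce
    have e: "opoly s A x = sc (coeff s 0) x" for x unfolding opoly_def True by simp
    show ?thesis unfolding surj_def
    proof
      fix y show "\<exists>x. y = opoly s A x"
        by (rule exI[of _ "sc (1 / coeff s 0) y"]) (simp add: e c)
    qed
  next
    case False
    hence "\<not> constant (poly s)" by (simp add: constant_degree)
    then obtain z where z: "poly s z = 0" using fundamental_theorem_of_algebra by blast
    then obtain t where t: "s = [:-z, 1:] * t" using poly_eq_0_iff_dvd by (metis dvdE)
    have t0: "t \<noteq> 0" using less.prems(1) t by auto
    have "degree s = degree [:-z, 1:] + degree t" unfolding t by (rule degree_mult_eq) (use t0 in auto)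
    hence dt: "degree t < degree s" by simp
    have "surj (opoly t A)"
    proof (rule less.hyps[OF dt t0])
      fix w assume "poly t w = 0"
      hence "poly s w = 0" using t by simp
      thus "bij (\<lambda>x. A x - sc w x)" by (rule less.prems(2))
    qed
    moreover have "surj (\<lambda>x. A x - sc z x)" using less.prems(2)[OF z] by (simp add: bij_is_surj)
    ultimately have "surj ((\<lambda>x. A x - sc z x) \<circ> opoly t A)" by (rule comp_surj)
    moreover have "opoly s A = (\<lambda>x. A x - sc z x) \<circ> opoly t A"
      by (rule ext) (simp only: t op_mult[OF lin] op_X[OF lin] o_apply)
    ultimately show ?thesis by simp
  qed
qed

end

lemma vanish_dvd: "finite R \<Longrightarrow> (\<forall>\<tau>\<in>R. poly s \<tau> = 0) \<Longrightarrow> (\<Prod>\<rho>\<in>R. [:-\<rho>, 1:]) dvd (s :: complex poly)"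
proof (induction R arbitrary: s rule: finite_induct)
  case empty thus ?case by simp
next
  case (insert a R)
  have "poly s a = 0" using insert.prems by simp
  then obtain t where t: "s = [:-a, 1:] * t" using poly_eq_0_iff_dvd by (metis dvdE)
  have "\<forall>\<tau>\<in>R. poly t \<tau> = 0"
  proof
    fix \<tau> assume "\<tau> \<in> R"
    hence "poly s \<tau> = 0" "\<tau> \<noteq> a" using insert.prems insert.hyps(2) by auto
    thus "poly t \<tau> = 0" using t by simp
  qed
  hence "(\<Prod>\<rho>\<in>R. [:-\<rho>, 1:]) dvd t" by (rule insert.IH)
  hence "[:-a, 1:] * (\<Prod>\<rho>\<in>R. [:-\<rho>, 1:]) dvd [:-a, 1:] * t" by (rule mult_dvd_mono[OF dvd_refl])
  thus ?case using insert.hyps t by simp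
qed

lemma lag_eval:
  assumes "finite S" "l \<in> S" "m \<in> S"
  shows "poly (lagrange_poly S l) m = (if m = l then 1 else 0)"
proof (cases "m = l")
  case True
  have "poly (lagrange_poly S l) m = (\<Prod>\<nu>\<in>S - {l}. 1)"
    unfolding lagrange_poly_def poly_prod True
    by (rule prod.cong) (auto simp: field_simps)
  thus ?thesis using True by simp
next
  case False
  have "poly (lagrange_poly S l) m = (\<Prod>\<nu>\<in>S - {l}. poly [:- \<nu> / (l - \<nu>), 1 / (l - \<nu>):] m)"
    unfolding lagrange_poly_def poly_prod by simp
  also have "\<dots> = 0"
    by (rule prod_zero) (use assms False in \<open>auto intro!: bexI[of _ m] simp: field_simps\<close>)
  finally show ?thesis using False by simp
qed

context hil begin

definition sdec :: "('a \<Rightarrow> 'a) \<Rightarrow> 'i set \<Rightarrow> ('i \<Rightarrow> 'a \<Rightarrow> 'a) \<Rightarrow> ('i \<Rightarrow> real) \<Rightarrow> bool" where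
  "sdec A I P lam \<longleftrightarrow> finite I \<and>
     (\<forall>i\<in>I. is_clinear sc (P i) \<and> is_bounded_op ip (P i) \<and> sa (P i)) \<and>
     (\<forall>i\<in>I. \<forall>j\<in>I. \<forall>x. P i (P j x) = (if i = j then P i x else 0)) \<and>
     (\<forall>x. (\<Sum>i\<in>I. P i x) = x) \<and>
     (\<forall>i\<in>I. \<forall>x. A (P i x) = sc (complex_of_real (lam i)) (P i x))"

lemma decomp_exists:
  assumes fs: "is_fs_observable sc ip A"
  shows "\<exists>(I :: complex set) P lam. sdec A I P lam"
proof -
  have lin: "is_clinear sc A" and bnd: "is_bounded_op ip A" and saA: "sa A"
    and fin: "finite (op_spectrum sc A)"
    using fs unfolding is_fs_observable_def sa_def by auto
  define \<sigma> where "\<sigma> = op_spectrum sc A"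
  define R where "R = \<sigma> \<union> cnj ` \<sigma>"
  have finR: "finite R" unfolding R_def \<sigma>_def using fin by simp
  have cR: "cnj ` R = R" unfolding R_def by (auto simp: image_Un image_image)
  define r where "r = (\<Prod>\<rho>\<in>R. [:-\<rho>, 1:])"
  have pr0: "poly r \<tau> = 0" if "\<tau> \<in> R" for \<tau>
    unfolding r_def poly_prod using finR that by (auto intro!: prod_zero bexI[of _ \<tau>])
  have mr: "map_poly cnj r = r"
  proof -
    have "poly (map_poly cnj r) z = poly r z" for z
    proof -
      have "poly (map_poly cnj r) z = cnj (\<Prod>\<rho>\<in>R. cnj z - \<rho>)"
        unfolding r_def poly_map_poly_cnj poly_prod by simp
      also have "\<dots> = (\<Prod>\<rho>\<in>R. z - cnj \<rho>)" by (simp add: cnj_prod)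
      also have "\<dots> = (\<Prod>\<rho>\<in>cnj ` R. z - \<rho>)"
        by (subst prod.reindex) (auto simp: inj_on_def)
      also have "\<dots> = poly r z" unfolding cR r_def poly_prod by simp
      finally show ?thesis .
    qed
    thus ?thesis using poly_eq_poly_eq_iff by blast
  qed
  have linr: "is_clinear sc (opoly r A)" by (rule op_lin[OF lin])
  have bndr: "is_bounded_op ip (opoly r A)" by (rule op_bnd[OF lin bnd])
  have sar: "sa (opoly r A)" unfolding sa_def using op_adj[OF lin saA, of r] mr by simp
  have rA0: "opoly r A x = 0" for x
  proof (cases "R = {}")
    case True
    hence "\<sigma> = {}" unfolding R_def by simp
    hence bj: "bij (\<lambda>x. A x - sc \<mu> x)" for \<mu> unfolding \<sigma>_def op_spectrum_def by blast
    have A0: "A y = 0" for y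
      by (rule zero_spectrum[OF lin bnd saA]) (use bj in \<open>simp add: bij_is_surj\<close>)
    have "inj (\<lambda>x. A x - sc 0 x)" using bj bij_is_inj by blast
    hence "inj (\<lambda>x::'a. (0::'a))" using A0 by simp
    thus ?thesis by (simp add: inj_def)
  next
    case False
    show ?thesis
    proof (rule zero_spectrum[OF linr bndr sar])
      fix \<mu> :: complex assume mu: "\<mu> \<noteq> 0"
      define s where "s = r - [:\<mu>:]"
      have e: "opoly r A x - sc \<mu> x = opoly s A x" for x unfolding s_def by (simp add: op_diff op_const)
      have s0: "s \<noteq> 0"
      proof
        assume "s = 0"
        hence "r = [:\<mu>:]" unfolding s_def by simp
        moreover obtain \<tau> where "\<tau> \<in> R" using False by blast
        ultimately show False using pr0 mu by fastforce
      qed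
      have "surj (opoly s A)"
      proof (rule op_surj[OF lin s0])
        fix z assume "poly s z = 0"
        hence "poly r z = \<mu>" unfolding s_def by simp
        hence "z \<notin> R" using pr0 mu by auto
        hence "z \<notin> op_spectrum sc A" unfolding R_def \<sigma>_def by simp
        thus "bij (\<lambda>x. A x - sc z x)" unfolding op_spectrum_def by simp
      qed
      thus "surj (\<lambda>x. opoly r A x - sc \<mu> x)" unfolding e by (simp add: fun_eq_iff)
    qed
  qed
  have vz: "opoly s A x = 0" if "\<forall>\<tau>\<in>R. poly s \<tau> = 0" for s x
  proof -
    have "r dvd s" unfolding r_def using vanish_dvd[OF finR that] .
    then obtain t where "s = r * t" by (rule dvdE)
    thus ?thesis by (simp add: op_mult[OF lin] rA0)
  qed
  define L where "L = (\<lambda>\<rho>. lagrange_poly R \<rho>)"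
  define P where "P = (\<lambda>\<rho>. opoly (L \<rho>) A)"
  have Lv: "poly (L \<rho>) \<tau> = (if \<tau> = \<rho> then 1 else 0)" if "\<rho> \<in> R" "\<tau> \<in> R" for \<rho> \<tau>
    unfolding L_def using lag_eval[OF finR that] .
  have P1: "(\<Sum>\<rho>\<in>R. P \<rho> x) = x" for x
  proof -
    have "opoly ((\<Sum>\<rho>\<in>R. L \<rho>) - 1) A x = 0"
    proof (rule vz, intro ballI)
      fix \<tau> assume t: "\<tau> \<in> R"
      have "poly (\<Sum>\<rho>\<in>R. L \<rho>) \<tau> = (\<Sum>\<rho>\<in>R. if \<tau> = \<rho> then 1 else 0)"
        unfolding poly_sum using Lv t by (intro sum.cong) auto
      also have "\<dots> = 1" using t finR by simp
      finally show "poly ((\<Sum>\<rho>\<in>R. L \<rho>) - 1) \<tau> = 0" by simp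
    qed
    thus ?thesis unfolding P_def by (simp add: op_diff op_sum op_1)
  qed
  have P2: "P \<rho> (P \<tau> x) = (if \<rho> = \<tau> then P \<rho> x else 0)" if "\<rho> \<in> R" "\<tau> \<in> R" for \<rho> \<tau> x
  proof -
    have "opoly (L \<rho> * L \<tau> - (if \<rho> = \<tau> then L \<rho> else 0)) A x = 0"
      by (rule vz) (use that Lv in auto)
    thus ?thesis unfolding P_def by (simp add: op_diff op_mult[OF lin] split: if_splits)
  qed
  have P3: "A (P \<rho> x) = sc \<rho> (P \<rho> x)" if "\<rho> \<in> R" for \<rho> x
  proof -
    have "opoly ([:0, 1:] * L \<rho> - smult \<rho> (L \<rho>)) A x = 0"
      by (rule vz) (use that Lv in auto)
    thus ?thesis unfolding P_def
      by (simp only: op_diff op_mult[OF lin] op_X0[OF lin] op_smult right_minus_eq)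
  qed
  have P4: "P \<rho> x = 0" if "\<rho> \<in> R" "Im \<rho> \<noteq> 0" for \<rho> x
  proof -
    let ?y = "P \<rho> x"
    have "ip (A ?y) ?y = ip ?y (A ?y)" by (rule sa_D[OF saA])
    hence "cnj \<rho> * ip ?y ?y = \<rho> * ip ?y ?y" using P3[OF that(1)] by simp
    moreover have "cnj \<rho> \<noteq> \<rho>" using that(2) by (metis cnj.simps(2) complex_cnj_cancel_iff Reals_cnj_iff complex_is_Real_iff)
    ultimately have "ip ?y ?y = 0" by simp
    thus ?thesis by (rule ip_zero)
  qed
  define I where "I = {\<rho>\<in>R. Im \<rho> = 0}"
  have finI: "finite I" unfolding I_def using finR by simp
  have IR: "I \<subseteq> R" unfolding I_def by auto
  have PI: "(\<Sum>\<rho>\<in>I. P \<rho> x) = x" for x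
  proof -
    have "(\<Sum>\<rho>\<in>I. P \<rho> x) = (\<Sum>\<rho>\<in>R. P \<rho> x)"
      by (rule sum.mono_neutral_left[OF finR IR]) (auto simp: I_def P4)
    thus ?thesis using P1 by simp
  qed
  have reI: "complex_of_real (Re \<rho>) = \<rho>" if "\<rho> \<in> I" for \<rho>
    using that unfolding I_def by (simp add: complex_eq_iff)
  have P3': "A (P \<rho> x) = sc (complex_of_real (Re \<rho>)) (P \<rho> x)" if "\<rho> \<in> I" for \<rho> x
    using P3[of \<rho> x] that IR reI[OF that] by auto
  have orth: "ip (P \<rho> x) (P \<tau> y) = 0" if "\<rho> \<in> I" "\<tau> \<in> I" "\<rho> \<noteq> \<tau>" for \<rho> \<tau> x y
  proof -
    have "ip (A (P \<rho> x)) (P \<tau> y) = ip (P \<rho> x) (A (P \<tau> y))" by (rule sa_D[OF saA])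
    moreover have "\<rho> \<in> R" "\<tau> \<in> R" using that IR by auto
    ultimately have "cnj \<rho> * ip (P \<rho> x) (P \<tau> y) = \<tau> * ip (P \<rho> x) (P \<tau> y)"
      using P3[of \<rho> x] P3[of \<tau> y] by simp
    moreover have "cnj \<rho> = \<rho>" using reI[OF that(1)] by (metis complex_cnj_complex_of_real)
    ultimately show ?thesis using that(3) by simp
  qed
  have linP: "is_clinear sc (P \<rho>)" for \<rho> unfolding P_def by (rule op_lin[OF lin])
  have bndP: "is_bounded_op ip (P \<rho>)" for \<rho> unfolding P_def by (rule op_bnd[OF lin bnd])
  have saP: "sa (P \<rho>)" if "\<rho> \<in> I" for \<rho>
  proof -
    have l: "ip (P \<rho> x) y = ip (P \<rho> x) (P \<rho> y)" for x y
    proof -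
      have "ip (P \<rho> x) y = (\<Sum>\<tau>\<in>I. ip (P \<rho> x) (P \<tau> y))"
        using PI[of y] ip_sum_right by metis
      also have "\<dots> = (\<Sum>\<tau>\<in>I. if \<tau> = \<rho> then ip (P \<rho> x) (P \<rho> y) else 0)"
        by (rule sum.cong) (use orth that in auto)
      also have "\<dots> = ip (P \<rho> x) (P \<rho> y)" using that finI by simp
      finally show ?thesis .
    qed
    have r: "ip x (P \<rho> y) = ip (P \<rho> x) (P \<rho> y)" for x y
    proof -
      have "ip x (P \<rho> y) = (\<Sum>\<tau>\<in>I. ip (P \<tau> x) (P \<rho> y))"
        using PI[of x] ip_sum_left by metis
      also have "\<dots> = (\<Sum>\<tau>\<in>I. if \<tau> = \<rho> then ip (P \<rho> x) (P \<rho> y) else 0)"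
        by (rule sum.cong) (use orth that in auto)
      also have "\<dots> = ip (P \<rho> x) (P \<rho> y)" using that finI by simp
      finally show ?thesis .
    qed
    show ?thesis unfolding sa_def using l r by simp
  qed
  have "sdec A I P Re"
    unfolding sdec_def using finI linP bndP saP P2 IR PI P3' by blast
  thus ?thesis by blast
qed

end

context hil begin

abbreviation V where "V \<equiv> tens_space sc ip"

definition tv :: "('a \<times> ('a \<Rightarrow> complex)) list \<Rightarrow> 'a \<Rightarrow> 'a" where
  "tv ps = (\<lambda>x. sum_list (map (\<lambda>(\<phi>, \<eta>). sc (\<eta> x) \<phi>) ps))"

lemma V_iff: "X \<in> V \<longleftrightarrow> (\<exists>ps. (\<forall>(\<phi>, \<eta>)\<in>set ps. is_cfunctional sc ip \<eta>) \<and> X = tv ps)"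
  unfolding tens_space_def tv_def by simp

lemma tv_Nil[simp]: "tv [] x = 0" unfolding tv_def by simp
lemma tv_Cons[simp]: "tv ((\<phi>, \<eta>) # ps) x = sc (\<eta> x) \<phi> + tv ps x" unfolding tv_def by simp
lemma tv_append: "tv (ps @ qs) x = tv ps x + tv qs x" unfolding tv_def by simp

lemma V_zero: "(\<lambda>x. 0) \<in> V" unfolding V_iff by (auto intro!: exI[of _ "[]"] simp: fun_eq_iff)

lemma V_add: "X \<in> V \<Longrightarrow> Y \<in> V \<Longrightarrow> (\<lambda>x. X x + Y x) \<in> V"
proof -
  assume "X \<in> V" "Y \<in> V"
  then obtain ps qs where p: "\<forall>(\<phi>, \<eta>)\<in>set ps. is_cfunctional sc ip \<eta>" "X = tv ps"
    and q: "\<forall>(\<phi>, \<eta>)\<in>set qs. is_cfunctional sc ip \<eta>" "Y = tv qs" unfolding V_iff by blast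
  show ?thesis unfolding V_iff
    by (rule exI[of _ "ps @ qs"]) (use p q in \<open>auto simp: tv_append fun_eq_iff\<close>)
qed

lemma tv_sc: "tv (map (\<lambda>(\<phi>, \<eta>). (sc c \<phi>, \<eta>)) ps) x = sc c (tv ps x)"
  by (induction ps) (auto simp: sc_add_right mult.commute)

lemma V_sc: "X \<in> V \<Longrightarrow> (\<lambda>x. sc c (X x)) \<in> V"
proof -
  assume "X \<in> V"
  then obtain ps where p: "\<forall>(\<phi>, \<eta>)\<in>set ps. is_cfunctional sc ip \<eta>" "X = tv ps" unfolding V_iff by blast
  show ?thesis unfolding V_iff
    by (rule exI[of _ "map (\<lambda>(\<phi>, \<eta>). (sc c \<phi>, \<eta>)) ps"]) (use p in \<open>auto simp: tv_sc fun_eq_iff\<close>)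
qed

lemma V_sum: "finite K \<Longrightarrow> (\<And>k. k \<in> K \<Longrightarrow> Y k \<in> V) \<Longrightarrow> (\<lambda>x. \<Sum>k\<in>K. Y k x) \<in> V"
proof (induction K rule: finite_induct)
  case empty thus ?case using V_zero by simp
next
  case (insert a K)
  have "(\<lambda>x. Y a x + (\<Sum>k\<in>K. Y k x)) \<in> V" using insert by (intro V_add) auto
  thus ?case using insert.hyps by simp
qed

lemma V_sum_sc: "finite K \<Longrightarrow> (\<And>k. k \<in> K \<Longrightarrow> Y k \<in> V) \<Longrightarrow> (\<lambda>x. \<Sum>k\<in>K. sc (c k) (Y k x)) \<in> V"
  using V_sum[of K "\<lambda>k x. sc (c k) (Y k x)"] V_sc by blast

lemma cfun_comp:
  assumes e: "is_cfunctional sc ip \<eta>" and lin: "is_clinear sc Q" and bnd: "is_bounded_op ip Q"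
  shows "is_cfunctional sc ip (\<eta> \<circ> Q)"
proof -
  obtain K0 where K0: "\<And>x. cmod (\<eta> x) \<le> K0 * N x" using e unfolding is_cfunctional_def by blast
  obtain L0 where L0: "\<And>x. N (Q x) \<le> L0 * N x" using bnd unfolding is_bounded_op_def by blast
  define K where "K = max K0 0"
  have K: "cmod (\<eta> x) \<le> K * N x" for x using K0[of x] N_nonneg[of x] unfolding K_def
    by (meson max.cobounded1 mult_right_mono order_trans)
  have "cmod (\<eta> (Q x)) \<le> (K * L0) * N x" for x
  proof -
    have "cmod (\<eta> (Q x)) \<le> K * N (Q x)" by (rule K)
    also have "\<dots> \<le> K * (L0 * N x)" using L0[of x] unfolding K_def by (intro mult_left_mono) auto
    finally show ?thesis by simp
  qed
  thus ?thesis using e lin_add[OF lin] lin_sc[OF lin] unfolding is_cfunctional_def by auto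
qed

lemma tv_comp: "is_clinear sc P \<Longrightarrow> tv (map (\<lambda>(\<phi>, \<eta>). (P \<phi>, \<eta> \<circ> Q)) ps) x = P (tv ps (Q x))"
  by (induction ps) (auto simp: lin_0 lin_add lin_sc)

lemma V_comp:
  assumes "X \<in> V" "is_clinear sc P" "is_clinear sc Q" "is_bounded_op ip Q"
  shows "(\<lambda>x. P (X (Q x))) \<in> V"
proof -
  obtain ps where p: "\<forall>(\<phi>, \<eta>)\<in>set ps. is_cfunctional sc ip \<eta>" "X = tv ps" using assms(1) unfolding V_iff by blast
  show ?thesis unfolding V_iff
    by (rule exI[of _ "map (\<lambda>(\<phi>, \<eta>). (P \<phi>, \<eta> \<circ> Q)) ps"])
       (use p assms in \<open>auto simp: tv_comp fun_eq_iff intro: cfun_comp\<close>)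
qed

lemma V_lin: assumes "X \<in> V" shows "is_clinear sc X"
proof -
  obtain ps where p: "\<forall>(\<phi>, \<eta>)\<in>set ps. is_cfunctional sc ip \<eta>" "X = tv ps" using assms unfolding V_iff by blast
  have "tv ps (x + y) = tv ps x + tv ps y \<and> tv ps (sc c x) = sc c (tv ps x)" for x y c
    using p(1)
  proof (induction ps)
    case Nil thus ?case by simp
  next
    case (Cons a ps)
    obtain \<phi> \<eta> where a: "a = (\<phi>, \<eta>)" by (cases a)
    have e: "is_cfunctional sc ip \<eta>" using Cons.prems a by auto
    hence "\<eta> (x + y) = \<eta> x + \<eta> y" "\<eta> (sc c x) = c * \<eta> x" unfolding is_cfunctional_def by auto
    thus ?case using Cons a by (auto simp: sc_add_left sc_add_right algebra_simps)
  qed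
  thus ?thesis unfolding is_clinear_def p(2) by blast
qed

end

context hil begin

lemma fcalc_abs:
  fixes T :: "('a \<Rightarrow> 'a) \<Rightarrow> 'a \<Rightarrow> 'a" and \<pi> :: "'k \<Rightarrow> ('a \<Rightarrow> 'a) \<Rightarrow> 'a \<Rightarrow> 'a" and \<mu> :: "'k \<Rightarrow> complex"
  assumes finK: "finite K"
    and \<pi>V: "\<And>k X. k \<in> K \<Longrightarrow> X \<in> V \<Longrightarrow> \<pi> k X \<in> V"
    and Vsum: "\<And>X x. X \<in> V \<Longrightarrow> (\<Sum>k\<in>K. \<pi> k X x) = X x"
    and Tlin: "\<And>(c :: 'k \<Rightarrow> complex) Y. T (\<lambda>x. \<Sum>k\<in>K. sc (c k) (Y k x)) = (\<lambda>x. \<Sum>k\<in>K. sc (c k) (T (Y k) x))"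
    and Teig: "\<And>k X. k \<in> K \<Longrightarrow> X \<in> V \<Longrightarrow> T (\<pi> k X) = (\<lambda>x. sc (\<mu> k) (\<pi> k X x))"
    and \<pi>lin: "\<And>l (d :: 'k \<Rightarrow> complex) Y. l \<in> K \<Longrightarrow>
        \<pi> l (\<lambda>x. \<Sum>k\<in>K. sc (d k) (Y k x)) = (\<lambda>x. \<Sum>k\<in>K. sc (d k) (\<pi> l (Y k) x))"
    and \<pi>orth: "\<And>l k X. l \<in> K \<Longrightarrow> k \<in> K \<Longrightarrow> X \<in> V \<Longrightarrow> \<pi> l (\<pi> k X) = (if l = k then \<pi> k X else (\<lambda>x. 0))"
    and XV: "X \<in> V"
  shows "fcalc sc ip f T X = (\<lambda>x. \<Sum>k\<in>K. sc (f (\<mu> k)) (\<pi> k X x))"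
proof -
  define S where "S = tens_spectrum sc ip T"
  have rep: "Y = (\<lambda>x. \<Sum>k\<in>K. sc 1 (\<pi> k Y x))" if "Y \<in> V" for Y
    using Vsum[OF that] by (simp add: fun_eq_iff)
  have TY: "T Y = (\<lambda>x. \<Sum>k\<in>K. sc (\<mu> k) (\<pi> k Y x))" if "Y \<in> V" for Y
  proof -
    have "T Y = T (\<lambda>x. \<Sum>k\<in>K. sc 1 (\<pi> k Y x))" using rep[OF that] by simp
    also have "\<dots> = (\<lambda>x. \<Sum>k\<in>K. sc 1 (T (\<pi> k Y) x))" by (rule Tlin)
    also have "\<dots> = (\<lambda>x. \<Sum>k\<in>K. sc (\<mu> k) (\<pi> k Y x))"
      by (rule ext, rule sum.cong) (use Teig that in auto)
    finally show ?thesis .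
  qed
  have pow: "(T^^n) X = (\<lambda>x. \<Sum>k\<in>K. sc (\<mu> k ^ n) (\<pi> k X x))" for n
  proof (induction n)
    case 0 show ?case using Vsum[OF XV] by (simp add: fun_eq_iff)
  next
    case (Suc n)
    have "(T^^Suc n) X = T (\<lambda>x. \<Sum>k\<in>K. sc (\<mu> k ^ n) (\<pi> k X x))" using Suc by simp
    also have "\<dots> = (\<lambda>x. \<Sum>k\<in>K. sc (\<mu> k ^ n) (T (\<pi> k X) x))" by (rule Tlin)
    also have "\<dots> = (\<lambda>x. \<Sum>k\<in>K. sc (\<mu> k ^ Suc n) (\<pi> k X x))"
      by (rule ext, rule sum.cong) (use Teig XV in \<open>auto simp: mult.commute\<close>)
    finally show ?case .
  qed
  have polyop: "poly_op sc q T X x = (\<Sum>k\<in>K. sc (poly q (\<mu> k)) (\<pi> k X x))" for q x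
  proof -
    have "poly_op sc q T X x = (\<Sum>i\<le>degree q. \<Sum>k\<in>K. sc (coeff q i * \<mu> k ^ i) (\<pi> k X x))"
      unfolding poly_op_def pow by (simp add: sc_sum_right)
    also have "\<dots> = (\<Sum>k\<in>K. \<Sum>i\<le>degree q. sc (coeff q i * \<mu> k ^ i) (\<pi> k X x))"
      by (rule sum.swap)
    also have "\<dots> = (\<Sum>k\<in>K. sc (poly q (\<mu> k)) (\<pi> k X x))"
      by (simp add: poly_altdef sc_sum_left)
    finally show ?thesis .
  qed
  define F where "F = (\<lambda>c Y. \<lambda>x. T Y x - sc c (Y x))"
  have FY: "F c Y = (\<lambda>x. \<Sum>k\<in>K. sc (\<mu> k - c) (\<pi> k Y x))" if "Y \<in> V" for c Y
  proof (rule ext)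
    fix x
    have "F c Y x = (\<Sum>k\<in>K. sc (\<mu> k) (\<pi> k Y x)) - sc c (\<Sum>k\<in>K. \<pi> k Y x)"
      unfolding F_def TY[OF that] Vsum[OF that] ..
    also have "\<dots> = (\<Sum>k\<in>K. sc (\<mu> k - c) (\<pi> k Y x))"
      by (simp add: sc_sum_right sc_diff_left sum_subtractf)
    finally show "F c Y x = (\<Sum>k\<in>K. sc (\<mu> k - c) (\<pi> k Y x))" .
  qed
  have \<pi>F: "\<pi> l (F c Y) = (\<lambda>x. sc (\<mu> l - c) (\<pi> l Y x))" if "Y \<in> V" "l \<in> K" for c Y l
  proof -
    have "\<pi> l (F c Y) = (\<lambda>x. \<Sum>k\<in>K. sc (\<mu> k - c) (\<pi> l (\<pi> k Y) x))"
      unfolding FY[OF that(1)] by (rule \<pi>lin[OF that(2)])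
    also have "\<dots> = (\<lambda>x. \<Sum>k\<in>K. if k = l then sc (\<mu> l - c) (\<pi> l Y x) else 0)"
      by (rule ext, rule sum.cong) (use \<pi>orth that in auto)
    also have "\<dots> = (\<lambda>x. sc (\<mu> l - c) (\<pi> l Y x))" using that(2) finK by simp
    finally show ?thesis .
  qed
  have Sup: "S \<subseteq> \<mu> ` K"
  proof
    fix c assume cS: "c \<in> S"
    show "c \<in> \<mu> ` K"
    proof (rule ccontr)
      assume nc: "c \<notin> \<mu> ` K"
      hence nz: "\<mu> k - c \<noteq> 0" if "k \<in> K" for k using that by auto
      have "bij_betw (F c) V V"
      proof (rule bij_betw_imageI)
        show "inj_on (F c) V"
        proof (rule inj_onI)
          fix Y Z assume Y: "Y \<in> V" and Z: "Z \<in> V" and e: "F c Y = F c Z"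
          have "\<pi> l Y x = \<pi> l Z x" if "l \<in> K" for l x
          proof -
            have "sc (\<mu> l - c) (\<pi> l Y x) = sc (\<mu> l - c) (\<pi> l Z x)"
              using \<pi>F[OF Y that, of c] \<pi>F[OF Z that, of c] e by metis
            hence "sc (1 / (\<mu> l - c)) (sc (\<mu> l - c) (\<pi> l Y x)) = sc (1 / (\<mu> l - c)) (sc (\<mu> l - c) (\<pi> l Z x))"
              by simp
            thus ?thesis using nz[OF that] by simp
          qed
          thus "Y = Z" using Vsum[OF Y] Vsum[OF Z] by (metis (no_types, lifting) ext sum.cong)
        qed
        show "F c ` V = V"
        proof
          show "F c ` V \<subseteq> V"
          proof
            fix W assume "W \<in> F c ` V"
            then obtain Y where Y: "Y \<in> V" "W = F c Y" by blast
            show "W \<in> V" unfolding Y(2) FY[OF Y(1)] by (rule V_sum_sc[OF finK]) (use \<pi>V Y in auto)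
          qed
          show "V \<subseteq> F c ` V"
          proof
            fix Y assume Y: "Y \<in> V"
            define Z where "Z = (\<lambda>x. \<Sum>k\<in>K. sc (1 / (\<mu> k - c)) (\<pi> k Y x))"
            have ZV: "Z \<in> V" unfolding Z_def by (rule V_sum_sc[OF finK]) (use \<pi>V Y in auto)
            have "F c Z = Y"
            proof (rule ext)
              fix x
              have "F c Z x = (\<Sum>k\<in>K. sc (1 / (\<mu> k - c)) (T (\<pi> k Y) x)) - sc c (Z x)"
                unfolding F_def Z_def Tlin ..
              also have "\<dots> = (\<Sum>k\<in>K. sc (1 / (\<mu> k - c) * \<mu> k) (\<pi> k Y x)) - (\<Sum>k\<in>K. sc (c * (1 / (\<mu> k - c))) (\<pi> k Y x))"
                unfolding Z_def by (simp add: sc_sum_right Teig[OF _ Y])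
              also have "\<dots> = (\<Sum>k\<in>K. sc ((1 / (\<mu> k - c) * \<mu> k) - (c * (1 / (\<mu> k - c)))) (\<pi> k Y x))"
                by (simp add: sc_diff_left sum_subtractf)
              also have "\<dots> = (\<Sum>k\<in>K. \<pi> k Y x)"
              proof (rule sum.cong[OF refl])
                fix k assume "k \<in> K"
                hence n: "\<mu> k - c \<noteq> 0" using nz by blast
                have "(1 / (\<mu> k - c) * \<mu> k) - (c * (1 / (\<mu> k - c))) = \<mu> k * (1 / (\<mu> k - c)) - c * (1 / (\<mu> k - c))"
                  by (simp only: mult.commute)
                also have "\<dots> = (\<mu> k - c) * (1 / (\<mu> k - c))" by (rule left_diff_distrib[symmetric])
                also have "\<dots> = 1" using n by simp
                finally have "(1 / (\<mu> k - c) * \<mu> k) - (c * (1 / (\<mu> k - c))) = 1" .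
                thus "sc ((1 / (\<mu> k - c) * \<mu> k) - (c * (1 / (\<mu> k - c)))) (\<pi> k Y x) = \<pi> k Y x"
                  by simp
              qed
              also have "\<dots> = Y x" by (rule Vsum[OF Y])
              finally show "F c Z x = Y x" .
            qed
            thus "Y \<in> F c ` V" using ZV by blast
          qed
        qed
      qed
      thus False using cS unfolding S_def tens_spectrum_def F_def by simp
    qed
  qed
  have finS: "finite S" using Sup finK by (meson finite_surj)
  have Slow: "\<mu> k \<in> S" if k: "k \<in> K" and nz: "\<pi> k X \<noteq> (\<lambda>x. 0)" for k
  proof -
    have T0: "T (\<lambda>x. 0) = (\<lambda>x. 0)" using Tlin[of "\<lambda>k. 0" "\<lambda>k x. 0"] by simp
    have "F (\<mu> k) (\<pi> k X) = (\<lambda>x. 0)" unfolding F_def Teig[OF k XV] by simp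
    moreover have "F (\<mu> k) (\<lambda>x. 0) = (\<lambda>x. 0)" unfolding F_def T0 by simp
    moreover have "\<pi> k X \<in> V" using \<pi>V[OF k XV] .
    ultimately have "\<not> inj_on (F (\<mu> k)) V" using V_zero nz unfolding inj_on_def by metis
    thus ?thesis unfolding S_def tens_spectrum_def F_def by (auto simp: bij_betw_def)
  qed
  show ?thesis
  proof (rule ext)
    fix x
    have "fcalc sc ip f T X x = (\<Sum>l\<in>S. \<Sum>k\<in>K. sc (f l * poly (lagrange_poly S l) (\<mu> k)) (\<pi> k X x))"
      unfolding fcalc_def S_def[symmetric] polyop by (simp add: sc_sum_right)
    also have "\<dots> = (\<Sum>k\<in>K. \<Sum>l\<in>S. sc (f l * poly (lagrange_poly S l) (\<mu> k)) (\<pi> k X x))"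
      by (rule sum.swap)
    also have "\<dots> = (\<Sum>k\<in>K. sc (f (\<mu> k)) (\<pi> k X x))"
    proof (rule sum.cong[OF refl])
      fix k assume k: "k \<in> K"
      show "(\<Sum>l\<in>S. sc (f l * poly (lagrange_poly S l) (\<mu> k)) (\<pi> k X x)) = sc (f (\<mu> k)) (\<pi> k X x)"
      proof (cases "\<pi> k X = (\<lambda>x. 0)")
        case True thus ?thesis by simp
      next
        case False
        hence mS: "\<mu> k \<in> S" by (rule Slow[OF k])
        have "(\<Sum>l\<in>S. sc (f l * poly (lagrange_poly S l) (\<mu> k)) (\<pi> k X x)) =
              (\<Sum>l\<in>S. if l = \<mu> k then sc (f (\<mu> k)) (\<pi> k X x) else 0)"
          by (rule sum.cong) (use lag_eval[OF finS _ mS] in auto)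
        also have "\<dots> = sc (f (\<mu> k)) (\<pi> k X x)" using mS finS by simp
        finally show ?thesis .
      qed
    qed
    finally show "fcalc sc ip f T X x = (\<Sum>k\<in>K. sc (f (\<mu> k)) (\<pi> k X x))" .
  qed
qed

end

context hil begin

lemma sdecD:
  assumes "sdec A I P lam"
  shows "finite I" "\<And>i. i \<in> I \<Longrightarrow> is_clinear sc (P i)" "\<And>i. i \<in> I \<Longrightarrow> is_bounded_op ip (P i)"
    "\<And>i. i \<in> I \<Longrightarrow> sa (P i)"
    "\<And>i j x. i \<in> I \<Longrightarrow> j \<in> I \<Longrightarrow> P i (P j x) = (if i = j then P i x else 0)"
    "\<And>x. (\<Sum>i\<in>I. P i x) = x"
    "\<And>i x. i \<in> I \<Longrightarrow> A (P i x) = sc (complex_of_real (lam i)) (P i x)"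
  using assms unfolding sdec_def by auto

lemma sdec_PA:
  assumes sd: "sdec A I P lam" and lin: "is_clinear sc A" and j: "j \<in> I"
  shows "P j (A x) = sc (complex_of_real (lam j)) (P j x)"
proof -
  have "P j (A x) = P j (A (\<Sum>i\<in>I. P i x))" using sdecD(6)[OF sd] by simp
  also have "\<dots> = (\<Sum>i\<in>I. sc (complex_of_real (lam i)) (P j (P i x)))"
    by (simp add: lin_sum[OF lin] lin_sum[OF sdecD(2)[OF sd j]] sdecD(7)[OF sd] lin_sc[OF sdecD(2)[OF sd j]])
  also have "\<dots> = (\<Sum>i\<in>I. if i = j then sc (complex_of_real (lam j)) (P j x) else 0)"
    by (rule sum.cong) (use sdecD(5)[OF sd] j in auto)
  also have "\<dots> = sc (complex_of_real (lam j)) (P j x)" using j sdecD(1)[OF sd] by simp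
  finally show ?thesis .
qed

lemma T_eq: "(\<lambda>Y y. tens_op A id Y y - tens_op id A Y y) = (\<lambda>Y y. A (Y y) - Y (A y))"
  by (simp add: tens_op_def fun_eq_iff)

lemma fcalc_sdec:
  assumes sd: "sdec A I P lam" and lin: "is_clinear sc A" and XV: "X \<in> V"
  shows "fcalc sc ip f (\<lambda>Y y. tens_op A id Y y - tens_op id A Y y) X =
    (\<lambda>x. \<Sum>k\<in>I \<times> I. sc (f (complex_of_real (lam (fst k) - lam (snd k)))) (P (fst k) (X (P (snd k) x))))"
  unfolding T_eq
proof (rule fcalc_abs[where \<pi> = "\<lambda>k X x. P (fst k) (X (P (snd k) x))"])
  note fin = sdecD(1)[OF sd] and linP = sdecD(2)[OF sd] and bndP = sdecD(3)[OF sd]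
    and orth = sdecD(5)[OF sd] and sumP = sdecD(6)[OF sd] and eig = sdecD(7)[OF sd]
  show "finite (I \<times> I)" using fin by simp
  show "(\<lambda>x. P (fst k) (Y (P (snd k) x))) \<in> V" if "k \<in> I \<times> I" "Y \<in> V" for k Y
  proof -
    have "fst k \<in> I" "snd k \<in> I" using that(1) by auto
    thus ?thesis by (intro V_comp[OF that(2)] linP bndP)
  qed
  show "(\<Sum>k\<in>I \<times> I. P (fst k) (Y (P (snd k) x))) = Y x" if Y: "Y \<in> V" for Y x
  proof -
    have "(\<Sum>k\<in>I \<times> I. P (fst k) (Y (P (snd k) x))) = (\<Sum>i\<in>I. \<Sum>j\<in>I. P i (Y (P j x)))"
      by (simp add: sum.cartesian_product split_def)
    also have "\<dots> = (\<Sum>i\<in>I. P i (Y (\<Sum>j\<in>I. P j x)))"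
      by (rule sum.cong) (auto simp: lin_sum[OF V_lin[OF Y]] lin_sum[OF linP])
    also have "\<dots> = Y x" by (simp add: sumP)
    finally show ?thesis .
  qed
  show "(\<lambda>y. A (\<Sum>k\<in>I \<times> I. sc (c k) (Y k y)) - (\<Sum>k\<in>I \<times> I. sc (c k) (Y k (A y)))) =
        (\<lambda>x. \<Sum>k\<in>I \<times> I. sc (c k) (A (Y k x) - Y k (A x)))" for c Y
    by (simp add: lin_sum[OF lin] lin_sc[OF lin] sc_diff_right sum_subtractf)
  show "(\<lambda>y. A (P (fst k) (Y (P (snd k) y))) - P (fst k) (Y (P (snd k) (A y)))) =
        (\<lambda>x. sc (complex_of_real (lam (fst k) - lam (snd k))) (P (fst k) (Y (P (snd k) x))))"
    if k: "k \<in> I \<times> I" and Y: "Y \<in> V" for k Y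
  proof (rule ext)
    fix y
    have i: "fst k \<in> I" and j: "snd k \<in> I" using k by auto
    have "A (P (fst k) (Y (P (snd k) y))) - P (fst k) (Y (P (snd k) (A y))) =
      sc (complex_of_real (lam (fst k))) (P (fst k) (Y (P (snd k) y))) -
      sc (complex_of_real (lam (snd k))) (P (fst k) (Y (P (snd k) y)))"
      by (simp add: eig[OF i] sdec_PA[OF sd lin j] lin_sc[OF V_lin[OF Y]] lin_sc[OF linP[OF i]])
    thus "A (P (fst k) (Y (P (snd k) y))) - P (fst k) (Y (P (snd k) (A y))) =
      sc (complex_of_real (lam (fst k) - lam (snd k))) (P (fst k) (Y (P (snd k) y)))"
      by (simp add: sc_diff_left)
  qed
  show "(\<lambda>x. P (fst l) ((\<lambda>x. \<Sum>k\<in>I \<times> I. sc (d k) (Y k x)) (P (snd l) x))) =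
        (\<lambda>x. \<Sum>k\<in>I \<times> I. sc (d k) (P (fst l) (Y k (P (snd l) x))))" if l: "l \<in> I \<times> I" for l d Y
  proof -
    have i: "fst l \<in> I" using l by auto
    show ?thesis by (simp add: lin_sum[OF linP[OF i]] lin_sc[OF linP[OF i]])
  qed
  show "(\<lambda>x. P (fst l) ((\<lambda>x. P (fst k) (Y (P (snd k) x))) (P (snd l) x))) =
        (if l = k then (\<lambda>x. P (fst k) (Y (P (snd k) x))) else (\<lambda>x. 0))"
    if l: "l \<in> I \<times> I" and k: "k \<in> I \<times> I" and Y: "Y \<in> V" for l k Y
  proof -
    have i: "fst l \<in> I" "fst k \<in> I" "snd l \<in> I" "snd k \<in> I" using l k by auto
    show ?thesis
    proof (cases "l = k")
      case True
      thus ?thesis using i by (simp add: orth)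
    next
      case False
      hence "fst l \<noteq> fst k \<or> snd k \<noteq> snd l" by (metis prod_eq_iff)
      thus ?thesis using i False
        by (auto simp: orth lin_0[OF V_lin[OF Y]] lin_0[OF linP] fun_eq_iff)
    qed
  qed
qed (rule XV)

lemma spec_sdec:
  assumes sd: "sdec A I P lam" and lin: "is_clinear sc A"
  shows "op_spectrum sc A \<subseteq> (\<lambda>i. complex_of_real (lam i)) ` I"
proof
  fix \<mu> assume m: "\<mu> \<in> op_spectrum sc A"
  show "\<mu> \<in> (\<lambda>i. complex_of_real (lam i)) ` I"
  proof (rule ccontr)
    assume nm: "\<mu> \<notin> (\<lambda>i. complex_of_real (lam i)) ` I"
    hence nz: "complex_of_real (lam i) - \<mu> \<noteq> 0" if "i \<in> I" for i using that by auto
    note fin = sdecD(1)[OF sd] and linP = sdecD(2)[OF sd]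
      and sumP = sdecD(6)[OF sd] and eig = sdecD(7)[OF sd]
    have PF: "P i (A x - sc \<mu> x) = sc (complex_of_real (lam i) - \<mu>) (P i x)" if "i \<in> I" for i x
      using that by (simp add: lin_diff[OF linP[OF that]] lin_sc[OF linP[OF that]] sdec_PA[OF sd lin] sc_diff_left)
    have "bij (\<lambda>x. A x - sc \<mu> x)"
    proof (rule bijI)
      show "inj (\<lambda>x. A x - sc \<mu> x)"
      proof (rule injI)
        fix x y assume e: "A x - sc \<mu> x = A y - sc \<mu> y"
        have "P i x = P i y" if i: "i \<in> I" for i
        proof -
          have "sc (complex_of_real (lam i) - \<mu>) (P i x) = sc (complex_of_real (lam i) - \<mu>) (P i y)"
            using PF[OF i, of x] PF[OF i, of y] e by simp
          hence "sc (1 / (complex_of_real (lam i) - \<mu>)) (sc (complex_of_real (lam i) - \<mu>) (P i x)) =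
                 sc (1 / (complex_of_real (lam i) - \<mu>)) (sc (complex_of_real (lam i) - \<mu>) (P i y))" by simp
          thus ?thesis using nz[OF i] by simp
        qed
        thus "x = y" using sumP[of x] sumP[of y] by (metis (no_types, lifting) sum.cong)
      qed
      show "surj (\<lambda>x. A x - sc \<mu> x)"
      proof (rule surjI)
        fix y
        define x where "x = (\<Sum>i\<in>I. sc (1 / (complex_of_real (lam i) - \<mu>)) (P i y))"
        have "A x - sc \<mu> x = (\<Sum>i\<in>I. sc (1 / (complex_of_real (lam i) - \<mu>) * complex_of_real (lam i)) (P i y))
               - (\<Sum>i\<in>I. sc (\<mu> * (1 / (complex_of_real (lam i) - \<mu>))) (P i y))"
          unfolding x_def by (simp add: lin_sum[OF lin] lin_sc[OF lin] eig sc_sum_right)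
        also have "\<dots> = (\<Sum>i\<in>I. sc (1 / (complex_of_real (lam i) - \<mu>) * complex_of_real (lam i) - \<mu> * (1 / (complex_of_real (lam i) - \<mu>))) (P i y))"
          by (simp add: sc_diff_left sum_subtractf)
        also have "\<dots> = (\<Sum>i\<in>I. P i y)"
        proof (rule sum.cong[OF refl])
          fix i assume i: "i \<in> I"
          have "1 / (complex_of_real (lam i) - \<mu>) * complex_of_real (lam i) - \<mu> * (1 / (complex_of_real (lam i) - \<mu>))
              = complex_of_real (lam i) * (1 / (complex_of_real (lam i) - \<mu>)) - \<mu> * (1 / (complex_of_real (lam i) - \<mu>))"
            by (simp only: mult.commute)
          also have "\<dots> = (complex_of_real (lam i) - \<mu>) * (1 / (complex_of_real (lam i) - \<mu>))"
            by (rule left_diff_distrib[symmetric])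
          also have "\<dots> = 1" using nz[OF i] by simp
          finally show "sc (1 / (complex_of_real (lam i) - \<mu>) * complex_of_real (lam i) - \<mu> * (1 / (complex_of_real (lam i) - \<mu>))) (P i y) = P i y"
            by simp
        qed
        also have "\<dots> = y" by (rule sumP)
        finally have "A x - sc \<mu> x = y" .
        thus "A (SOME x. A x - sc \<mu> x = y) - sc \<mu> (SOME x. A x - sc \<mu> x = y) = y"
          by (rule someI[where P = "\<lambda>x. A x - sc \<mu> x = y"])
      qed
    qed
    thus False using m unfolding op_spectrum_def by simp
  qed
qed

end

context hil begin

lemma lin_sum_ops: "(\<And>i. i \<in> J \<Longrightarrow> is_clinear sc (P i)) \<Longrightarrow> is_clinear sc (\<lambda>x. \<Sum>i\<in>J. P i x)"
  unfolding is_clinear_def by (auto simp: sum.distrib sc_sum_right)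

lemma bnd_sum_ops: assumes "finite J" "\<And>i. i \<in> J \<Longrightarrow> is_bounded_op ip (P i)"
  shows "is_bounded_op ip (\<lambda>x. \<Sum>i\<in>J. P i x)"
  using assms
proof (induction J rule: finite_induct)
  case empty thus ?case unfolding is_bounded_op_def by (auto intro!: exI[of _ 0])
next
  case (insert a J)
  obtain K1 where K1: "\<And>x. N (P a x) \<le> K1 * N x" using insert.prems unfolding is_bounded_op_def by blast
  obtain K2 where K2: "\<And>x. N (\<Sum>i\<in>J. P i x) \<le> K2 * N x" using insert unfolding is_bounded_op_def by blast
  show ?case unfolding is_bounded_op_def
  proof (intro exI allI)
    fix x
    have "N (\<Sum>i\<in>insert a J. P i x) = N (P a x + (\<Sum>i\<in>J. P i x))" using insert.hyps by simp
    also have "\<dots> \<le> N (P a x) + N (\<Sum>i\<in>J. P i x)" by (rule N_triangle)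
    also have "\<dots> \<le> (K1 + K2) * N x" using K1[of x] K2[of x] by (simp add: algebra_simps)
    finally show "N (\<Sum>i\<in>insert a J. P i x) \<le> (K1 + K2) * N x" .
  qed
qed

lemma sa_sum_ops: "(\<And>i. i \<in> J \<Longrightarrow> sa (P i)) \<Longrightarrow> sa (\<lambda>x. \<Sum>i\<in>J. P i x)"
  unfolding sa_def by (simp add: ip_sum_left ip_sum_right)

lemma sdec_sub:
  assumes sd: "sdec A I P lam" and J: "J \<subseteq> I"
  shows "is_clinear sc (\<lambda>x. \<Sum>i\<in>J. P i x)" "is_bounded_op ip (\<lambda>x. \<Sum>i\<in>J. P i x)"
    "sa (\<lambda>x. \<Sum>i\<in>J. P i x)" "\<And>x. (\<Sum>i\<in>J. P i (\<Sum>j\<in>J. P j x)) = (\<Sum>i\<in>J. P i x)"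
    "\<And>x. x - (\<Sum>i\<in>J. P i x) = (\<Sum>i\<in>I - J. P i x)"
proof -
  note fin = sdecD(1)[OF sd] and linP = sdecD(2)[OF sd] and bndP = sdecD(3)[OF sd]
    and saP = sdecD(4)[OF sd] and orth = sdecD(5)[OF sd] and sumP = sdecD(6)[OF sd]
  have finJ: "finite J" using J fin finite_subset by blast
  show "is_clinear sc (\<lambda>x. \<Sum>i\<in>J. P i x)" using J linP by (intro lin_sum_ops) auto
  show "is_bounded_op ip (\<lambda>x. \<Sum>i\<in>J. P i x)" using J bndP finJ by (intro bnd_sum_ops) auto
  show "sa (\<lambda>x. \<Sum>i\<in>J. P i x)" using J saP by (intro sa_sum_ops) auto
  show "(\<Sum>i\<in>J. P i (\<Sum>j\<in>J. P j x)) = (\<Sum>i\<in>J. P i x)" for x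
  proof -
    have "(\<Sum>i\<in>J. P i (\<Sum>j\<in>J. P j x)) = (\<Sum>i\<in>J. \<Sum>j\<in>J. if i = j then P i x else 0)"
    proof (rule sum.cong[OF refl])
      fix i assume i: "i \<in> J"
      have iI: "i \<in> I" using i J by auto
      have "P i (\<Sum>j\<in>J. P j x) = (\<Sum>j\<in>J. P i (P j x))" by (rule lin_sum[OF linP[OF iI]])
      also have "\<dots> = (\<Sum>j\<in>J. if i = j then P i x else 0)"
      proof (rule sum.cong[OF refl])
        fix j assume "j \<in> J"
        hence "j \<in> I" using J by auto
        thus "P i (P j x) = (if i = j then P i x else 0)" using orth[OF iI] by simp
      qed
      finally show "P i (\<Sum>j\<in>J. P j x) = (\<Sum>j\<in>J. if i = j then P i x else 0)" .
    qed
    also have "\<dots> = (\<Sum>i\<in>J. P i x)" using finJ by simp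
    finally show ?thesis .
  qed
  show "x - (\<Sum>i\<in>J. P i x) = (\<Sum>i\<in>I - J. P i x)" for x
    using sum.subset_diff[OF J fin, of "\<lambda>i. P i x"] sumP[of x] by (simp add: algebra_simps)
qed

lemma sep_lemma:
  assumes sd: "sdec A I P lam" and J: "J \<subseteq> I" and XV: "X \<in> V"
  defines "Q \<equiv> (\<lambda>x. \<Sum>i\<in>J. P i x)"
  shows "Q (X (x - Q x)) + (X (Q x) - Q (X (Q x))) =
    (\<Sum>k\<in>I \<times> I. if (fst k \<in> J) \<noteq> (snd k \<in> J) then P (fst k) (X (P (snd k) x)) else 0)"
proof -
  note fin = sdecD(1)[OF sd] and linP = sdecD(2)[OF sd]
  have finJ: "finite J" using J fin finite_subset by blast
  have linX: "is_clinear sc X" by (rule V_lin[OF XV])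
  have v: "\<And>y. y - Q y = (\<Sum>i\<in>I - J. P i y)" unfolding Q_def by (rule sdec_sub(5)[OF sd J])
  have "Q (X (x - Q x)) + (X (Q x) - Q (X (Q x))) =
      (\<Sum>a\<in>J. \<Sum>b\<in>I - J. P a (X (P b x))) + (\<Sum>a\<in>I - J. \<Sum>b\<in>J. P a (X (P b x)))"
  proof -
    have PJ: "P a (sum f S) = (\<Sum>b\<in>S. P a (f b))" if "a \<in> I" for a f S
      by (rule lin_sum[OF linP[OF that]])
    have 1: "Q (X (x - Q x)) = (\<Sum>a\<in>J. \<Sum>b\<in>I - J. P a (X (P b x)))"
      unfolding v unfolding Q_def lin_sum[OF linX]
      by (rule sum.cong[OF refl]) (use J PJ in auto)
    have 2: "X (Q x) - Q (X (Q x)) = (\<Sum>a\<in>I - J. \<Sum>b\<in>J. P a (X (P b x)))"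
      unfolding v unfolding Q_def lin_sum[OF linX]
      by (rule sum.cong[OF refl]) (use PJ in auto)
    show ?thesis unfolding 1 2 ..
  qed
  also have "\<dots> = (\<Sum>a\<in>I. \<Sum>b\<in>I. if (a \<in> J) \<noteq> (b \<in> J) then P a (X (P b x)) else 0)"
  proof -
    have s: "(\<Sum>b\<in>I. if (a \<in> J) \<noteq> (b \<in> J) then P a (X (P b x)) else 0) =
          (if a \<in> J then (\<Sum>b\<in>I - J. P a (X (P b x))) else (\<Sum>b\<in>J. P a (X (P b x))))" for a
    proof -
      have e1: "(\<Sum>b\<in>I. if b \<notin> J then P a (X (P b x)) else 0) = (\<Sum>b\<in>I - J. P a (X (P b x)))"
        using fin by (simp add: sum.If_cases Diff_eq Compl_eq)
      have e2: "(\<Sum>b\<in>I. if b \<in> J then P a (X (P b x)) else 0) = (\<Sum>b\<in>J. P a (X (P b x)))"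
        using fin J by (simp add: sum.If_cases Int_absorb1)
      show ?thesis using e1 e2 by (cases "a \<in> J") auto
    qed
    have "(\<Sum>a\<in>I. \<Sum>b\<in>I. if (a \<in> J) \<noteq> (b \<in> J) then P a (X (P b x)) else 0) =
        (\<Sum>a\<in>I. if a \<in> J then (\<Sum>b\<in>I - J. P a (X (P b x))) else (\<Sum>b\<in>J. P a (X (P b x))))"
      using s by simp
    also have "\<dots> = (\<Sum>a\<in>I \<inter> J. \<Sum>b\<in>I - J. P a (X (P b x))) + (\<Sum>a\<in>I \<inter> - J. \<Sum>b\<in>J. P a (X (P b x)))"
      using fin by (simp add: sum.If_cases)
    finally show ?thesis using J by (simp add: Int_absorb1 Diff_eq)
  qed
  also have "\<dots> = (\<Sum>k\<in>I \<times> I. if (fst k \<in> J) \<noteq> (snd k \<in> J) then P (fst k) (X (P (snd k) x)) else 0)"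
    by (simp add: sum.cartesian_product split_def)
  finally show ?thesis .
qed

lemma sdec_proj:
  assumes lin: "is_clinear sc Q" and bnd: "is_bounded_op ip Q" and saQ: "sa Q" and idem: "\<And>x. Q (Q x) = Q x"
  shows "sdec (\<lambda>x. sc (complex_of_real c) (Q x)) (UNIV :: bool set) (\<lambda>b. if b then Q else (\<lambda>x. x - Q x))
           (\<lambda>b. if b then c else 0)"
proof -
  have linR: "is_clinear sc (\<lambda>x. x - Q x)" using lin unfolding is_clinear_def
    by (auto simp: sc_diff_right)
  obtain K where K: "\<And>x. N (Q x) \<le> K * N x" using bnd unfolding is_bounded_op_def by blast
  have bndR: "is_bounded_op ip (\<lambda>x. x - Q x)" unfolding is_bounded_op_def
  proof (intro exI allI)
    fix x
    have "N (x - Q x) \<le> N x + N (Q x)" using N_triangle[of x "- Q x"] by (simp add: N_minus)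
    also have "\<dots> \<le> (1 + K) * N x" using K[of x] by (simp add: algebra_simps)
    finally show "N (x - Q x) \<le> (1 + K) * N x" .
  qed
  have saR: "sa (\<lambda>x. x - Q x)" using saQ unfolding sa_def by (simp add: ip_diff_left ip_diff_right)
  have QR: "Q (x - Q x) = 0" for x by (simp add: lin_diff[OF lin] idem)
  have RQ: "Q x - Q (Q x) = 0" for x by (simp add: idem)
  have RR: "(x - Q x) - Q (x - Q x) = x - Q x" for x by (simp add: QR)
  have UNIVb: "(UNIV :: bool set) = {True, False}" by auto
  show ?thesis unfolding sdec_def UNIVb
    using lin bnd saQ linR bndR saR QR RQ RR idem
    by (auto simp: lin_sc[OF lin] lin_diff[OF lin])
qed

lemma proj_fs:
  assumes lin: "is_clinear sc Q" and bnd: "is_bounded_op ip Q" and saQ: "sa Q" and idem: "\<And>x. Q (Q x) = Q x"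
  shows "is_fs_observable sc ip (\<lambda>x. sc (complex_of_real c) (Q x))"
proof -
  let ?B = "\<lambda>x. sc (complex_of_real c) (Q x)"
  have linB: "is_clinear sc ?B" using lin unfolding is_clinear_def by (auto simp: sc_add_right mult.commute)
  obtain K where K: "\<And>x. N (Q x) \<le> K * N x" using bnd unfolding is_bounded_op_def by blast
  have bndB: "is_bounded_op ip ?B" unfolding is_bounded_op_def
  proof (intro exI allI)
    fix x
    have "N (?B x) = \<bar>c\<bar> * N (Q x)" by (simp only: N_sc norm_of_real)
    also have "\<dots> \<le> \<bar>c\<bar> * (K * N x)" using K[of x] by (intro mult_left_mono) auto
    finally show "N (?B x) \<le> (\<bar>c\<bar> * K) * N x" by simp
  qed
  have saB: "\<forall>x y. ip (?B x) y = ip x (?B y)" using saQ unfolding sa_def by simp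
  have "op_spectrum sc ?B \<subseteq> (\<lambda>i. complex_of_real ((\<lambda>b. if b then c else 0) i)) ` (UNIV :: bool set)"
    by (rule spec_sdec[OF sdec_proj[OF lin bnd saQ idem] linB])
  hence "finite (op_spectrum sc ?B)" by (rule finite_subset) simp
  thus ?thesis unfolding is_fs_observable_def using linB bndB saB by blast
qed

end

definition gap :: "real set \<Rightarrow> real \<Rightarrow> real" where
  "gap L t = (if \<exists>s\<in>L. t < s then Min {s\<in>L. t < s} - t else 0)"

lemma gap_nonneg: assumes "finite L" shows "gap L t \<ge> 0"
proof (cases "\<exists>s\<in>L. t < s")
  case True
  have "Min {s\<in>L. t < s} \<in> {s\<in>L. t < s}" using True assms by (intro Min_in) auto
  thus ?thesis using True unfolding gap_def by auto
qed (simp add: gap_def)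

lemma gap_sum:
  assumes fin: "finite L"
  shows "a \<in> L \<Longrightarrow> b \<in> L \<Longrightarrow> a \<le> b \<Longrightarrow> (\<Sum>t\<in>{t\<in>L. a \<le> t \<and> t < b}. gap L t) = b - a"
proof (induction "card {t\<in>L. a \<le> t \<and> t < b}" arbitrary: a rule: less_induct)
  case less
  show ?case
  proof (cases "a = b")
    case True
    have e: "{t\<in>L. a \<le> t \<and> t < b} = {}" using True by auto
    show ?thesis unfolding e using True by simp
  next
    case False
    hence ab: "a < b" using less.prems by simp
    define m where "m = Min {s\<in>L. a < s}"
    have ne: "\<exists>s\<in>L. a < s" using ab less.prems by auto
    have mS: "m \<in> {s\<in>L. a < s}" unfolding m_def using ne fin by (intro Min_in) auto
    have mle: "m \<le> s" if "s \<in> L" "a < s" for s unfolding m_def using that fin by (intro Min_le) auto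
    have mb: "m \<le> b" using mle[OF less.prems(2) ab] .
    have ga: "gap L a = m - a" unfolding gap_def m_def using ne by simp
    have split: "{t\<in>L. a \<le> t \<and> t < b} = insert a {t\<in>L. m \<le> t \<and> t < b}"
    proof
      show "{t\<in>L. a \<le> t \<and> t < b} \<subseteq> insert a {t\<in>L. m \<le> t \<and> t < b}"
      proof
        fix t assume t: "t \<in> {t\<in>L. a \<le> t \<and> t < b}"
        show "t \<in> insert a {t\<in>L. m \<le> t \<and> t < b}"
        proof (cases "t = a")
          case False thus ?thesis using t mle[of t] by auto
        qed simp
      qed
      show "insert a {t\<in>L. m \<le> t \<and> t < b} \<subseteq> {t\<in>L. a \<le> t \<and> t < b}"
        using mS ab less.prems(1) by auto
    qed
    have anot: "a \<notin> {t\<in>L. m \<le> t \<and> t < b}" using mS by auto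
    have finS: "finite {t\<in>L. m \<le> t \<and> t < b}" using fin by simp
    have "card {t\<in>L. m \<le> t \<and> t < b} < card {t\<in>L. a \<le> t \<and> t < b}"
      unfolding split using anot finS by simp
    hence IH: "(\<Sum>t\<in>{t\<in>L. m \<le> t \<and> t < b}. gap L t) = b - m"
      using less.hyps mS less.prems(2) mb by blast
    have "(\<Sum>t\<in>{t\<in>L. a \<le> t \<and> t < b}. gap L t) = gap L a + (\<Sum>t\<in>{t\<in>L. m \<le> t \<and> t < b}. gap L t)"
      unfolding split using anot finS by simp
    thus ?thesis using IH ga by simp
  qed
qed

lemma gap_ind:
  assumes fin: "finite L" and a: "a \<in> L" and b: "b \<in> L"
  shows "(\<Sum>t\<in>L. gap L t * (if (a \<le> t) \<noteq> (b \<le> t) then 1 else 0)) = \<bar>a - b\<bar>"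
proof -
  have "(\<Sum>t\<in>L. gap L t * (if (a \<le> t) \<noteq> (b \<le> t) then 1 else 0)) =
        (\<Sum>t\<in>L. if min a b \<le> t \<and> t < max a b then gap L t else 0)"
    by (rule sum.cong) (auto simp: min_def max_def)
  also have "\<dots> = (\<Sum>t\<in>{t\<in>L. min a b \<le> t \<and> t < max a b}. gap L t)"
    using fin by (simp add: sum.inter_filter)
  also have "\<dots> = max a b - min a b"
    by (rule gap_sum[OF fin]) (use a b in \<open>auto simp: min_def max_def\<close>)
  also have "\<dots> = \<bar>a - b\<bar>" by (simp add: min_def max_def)
  finally show ?thesis .
qed

lemma sum_list_map_concat: "sum_list (map f (concat xss)) = sum_list (map (\<lambda>xs. sum_list (map f xs)) xss)"
  by (induction xss) auto

context hil begin

abbreviation TT where "TT A \<equiv> (\<lambda>Y y. tens_op A id Y y - tens_op id A Y y)"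
abbreviation fp where "fp p \<equiv> (\<lambda>l. complex_of_real (cmod l powr p))"

lemma fc_A:
  assumes sd: "sdec A I P lam" and lin: "is_clinear sc A" and XV: "X \<in> V"
  shows "fcalc sc ip (fp 1) (TT A) X x =
    (\<Sum>k\<in>I \<times> I. sc (complex_of_real \<bar>lam (fst k) - lam (snd k)\<bar>) (P (fst k) (X (P (snd k) x))))"
proof -
  have h: "\<And>a b. cmod (complex_of_real a - complex_of_real b) = \<bar>a - b\<bar>" by (metis norm_of_real of_real_diff)
  show ?thesis unfolding fcalc_sdec[OF sd lin XV] by (simp add: h)
qed

lemma fc_B:
  assumes lin: "is_clinear sc Q" and bnd: "is_bounded_op ip Q" and saQ: "sa Q" and idem: "\<And>x. Q (Q x) = Q x"
    and g: "g \<ge> 0" and p: "p > 0" and XV: "X \<in> V"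
  shows "fcalc sc ip (fp p) (TT (\<lambda>x. sc (complex_of_real (g powr (1/p))) (Q x))) X x =
    sc (complex_of_real g) (Q (X (x - Q x)) + (X (Q x) - Q (X (Q x))))"
proof -
  let ?c = "g powr (1/p)"
  have linB: "is_clinear sc (\<lambda>x. sc (complex_of_real ?c) (Q x))"
    using lin unfolding is_clinear_def by (auto simp: sc_add_right mult.commute)
  have cg: "\<bar>?c\<bar> powr p = g"
  proof -
    have "\<bar>?c\<bar> powr p = g powr (1/p * p)" by (simp add: powr_powr)
    also have "\<dots> = g" using p g by (simp add: powr_one)
    finally show ?thesis .
  qed
  have cg': "\<bar>- ?c\<bar> powr p = g" using cg by simp
  have UU: "(UNIV :: bool set) \<times> UNIV = {(True, True), (True, False), (False, True), (False, False)}" by auto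
  show ?thesis
    unfolding fcalc_sdec[OF sdec_proj[OF lin bnd saQ idem] linB XV] UU
    using p cg cg' by (simp add: sc_add_right)
qed

lemma per_A:
  assumes fs: "is_fs_observable sc ip A" and p: "p > 0"
  shows "\<exists>Bs. (\<forall>B\<in>set Bs. is_fs_observable sc ip B) \<and>
    (\<forall>X\<in>V. \<forall>x. sum_list (map (\<lambda>B. fcalc sc ip (fp p) (TT B) X x) Bs) = fcalc sc ip (fp 1) (TT A) X x)"
proof -
  have lin: "is_clinear sc A" using fs unfolding is_fs_observable_def by blast
  obtain I :: "complex set" and P lam where sd: "sdec A I P lam" using decomp_exists[OF fs] by blast
  note fin = sdecD(1)[OF sd]
  define L where "L = lam ` I"
  have finL: "finite L" unfolding L_def using fin by simp
  define J where "J = (\<lambda>t. {i\<in>I. lam i \<le> t})"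
  have JI: "J t \<subseteq> I" for t unfolding J_def by auto
  define Q where "Q = (\<lambda>t x. \<Sum>i\<in>J t. P i x)"
  define B where "B = (\<lambda>t x. sc (complex_of_real (gap L t powr (1/p))) (Q t x))"
  have linQ: "is_clinear sc (Q t)" for t unfolding Q_def by (rule sdec_sub(1)[OF sd JI])
  have bndQ: "is_bounded_op ip (Q t)" for t unfolding Q_def by (rule sdec_sub(2)[OF sd JI])
  have saQ: "sa (Q t)" for t unfolding Q_def by (rule sdec_sub(3)[OF sd JI])
  have idQ: "Q t (Q t x) = Q t x" for t x unfolding Q_def by (rule sdec_sub(4)[OF sd JI])
  define Bs where "Bs = map B (sorted_list_of_set L)"
  have "\<forall>B\<in>set Bs. is_fs_observable sc ip B"
    unfolding Bs_def B_def using proj_fs[OF linQ bndQ saQ idQ] by auto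
  moreover have "sum_list (map (\<lambda>B. fcalc sc ip (fp p) (TT B) X x) Bs) = fcalc sc ip (fp 1) (TT A) X x"
    if XV: "X \<in> V" for X x
  proof -
    define v where "v = (\<lambda>k. P (fst k) (X (P (snd k) x)))"
    define ind where "ind = (\<lambda>t k. if (lam (fst k) \<le> t) \<noteq> (lam (snd k) \<le> t) then 1 else (0::real))"
    have "sum_list (map (\<lambda>B. fcalc sc ip (fp p) (TT B) X x) Bs) = (\<Sum>t\<in>L. fcalc sc ip (fp p) (TT (B t)) X x)"
      unfolding Bs_def using finL by (simp add: sum_list_distinct_conv_sum_set)
    also have "\<dots> = (\<Sum>t\<in>L. sc (complex_of_real (gap L t)) (Q t (X (x - Q t x)) + (X (Q t x) - Q t (X (Q t x)))))"
      unfolding B_def by (rule sum.cong[OF refl], rule fc_B[OF linQ bndQ saQ idQ gap_nonneg[OF finL] p XV])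
    also have "\<dots> = (\<Sum>t\<in>L. sc (complex_of_real (gap L t)) (\<Sum>k\<in>I \<times> I. sc (complex_of_real (ind t k)) (v k)))"
    proof (rule sum.cong[OF refl])
      fix t assume "t \<in> L"
      have "Q t (X (x - Q t x)) + (X (Q t x) - Q t (X (Q t x))) =
          (\<Sum>k\<in>I \<times> I. if (fst k \<in> J t) \<noteq> (snd k \<in> J t) then v k else 0)"
        unfolding Q_def v_def by (rule sep_lemma[OF sd JI XV])
      also have "\<dots> = (\<Sum>k\<in>I \<times> I. sc (complex_of_real (ind t k)) (v k))"
        by (rule sum.cong[OF refl]) (auto simp: J_def ind_def)
      finally show "sc (complex_of_real (gap L t)) (Q t (X (x - Q t x)) + (X (Q t x) - Q t (X (Q t x)))) =
          sc (complex_of_real (gap L t)) (\<Sum>k\<in>I \<times> I. sc (complex_of_real (ind t k)) (v k))" by simp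
    qed
    also have "\<dots> = (\<Sum>t\<in>L. \<Sum>k\<in>I \<times> I. sc (complex_of_real (gap L t * ind t k)) (v k))"
      by (simp add: sc_sum_right)
    also have "\<dots> = (\<Sum>k\<in>I \<times> I. \<Sum>t\<in>L. sc (complex_of_real (gap L t * ind t k)) (v k))"
      by (rule sum.swap)
    also have "\<dots> = (\<Sum>k\<in>I \<times> I. sc (complex_of_real (\<Sum>t\<in>L. gap L t * ind t k)) (v k))"
      by (simp add: sc_sum_left)
    also have "\<dots> = (\<Sum>k\<in>I \<times> I. sc (complex_of_real \<bar>lam (fst k) - lam (snd k)\<bar>) (v k))"
    proof (rule sum.cong[OF refl])
      fix k assume k: "k \<in> I \<times> I"
      have "(\<Sum>t\<in>L. gap L t * ind t k) = \<bar>lam (fst k) - lam (snd k)\<bar>"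
        unfolding ind_def by (rule gap_ind[OF finL]) (use k in \<open>auto simp: L_def\<close>)
      thus "sc (complex_of_real (\<Sum>t\<in>L. gap L t * ind t k)) (v k) = sc (complex_of_real \<bar>lam (fst k) - lam (snd k)\<bar>) (v k)"
        by simp
    qed
    also have "\<dots> = fcalc sc ip (fp 1) (TT A) X x"
      unfolding fc_A[OF sd lin XV] v_def ..
    finally show ?thesis .
  qed
  ultimately show ?thesis by blast
qed

lemma main_incl:
  assumes p: "p > 0"
  shows "C_set sc ip 1 \<subseteq> C_set sc ip p"
proof
  fix Z assume "Z \<in> C_set sc ip 1"
  then obtain As where Z: "Z = restrict (C_op sc ip 1 As) V" and As: "\<forall>A\<in>set As. is_fs_observable sc ip A"
    unfolding C_set_def by blast
  define Bof where "Bof = (\<lambda>A. SOME Bs. (\<forall>B\<in>set Bs. is_fs_observable sc ip B) \<and>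
    (\<forall>X\<in>V. \<forall>x. sum_list (map (\<lambda>B. fcalc sc ip (fp p) (TT B) X x) Bs) = fcalc sc ip (fp 1) (TT A) X x))"
  have Bof: "(\<forall>B\<in>set (Bof A). is_fs_observable sc ip B) \<and>
    (\<forall>X\<in>V. \<forall>x. sum_list (map (\<lambda>B. fcalc sc ip (fp p) (TT B) X x) (Bof A)) = fcalc sc ip (fp 1) (TT A) X x)"
    if "A \<in> set As" for A
    unfolding Bof_def by (rule someI_ex) (use per_A[OF _ p] As that in blast)
  define Bss where "Bss = concat (map Bof As)"
  have Bss: "\<forall>B\<in>set Bss. is_fs_observable sc ip B" unfolding Bss_def using Bof by auto
  have "C_op sc ip p Bss X = C_op sc ip 1 As X" if XV: "X \<in> V" for X
  proof (rule ext)
    fix x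
    have "C_op sc ip p Bss X x = sum_list (map (\<lambda>A. sum_list (map (\<lambda>B. fcalc sc ip (fp p) (TT B) X x) (Bof A))) As)"
      unfolding C_op_def Bss_def sum_list_map_concat map_map by (simp add: o_def)
    also have "\<dots> = sum_list (map (\<lambda>A. fcalc sc ip (fp 1) (TT A) X x) As)"
      by (rule arg_cong[where f = sum_list], rule map_cong[OF refl]) (use Bof XV in blast)
    also have "\<dots> = C_op sc ip 1 As X x" unfolding C_op_def by simp
    finally show "C_op sc ip p Bss X x = C_op sc ip 1 As X x" .
  qed
  hence "Z = restrict (C_op sc ip p Bss) V" unfolding Z by (auto simp: restrict_def fun_eq_iff)
  thus "Z \<in> C_set sc ip p" unfolding C_set_def using Bss by blast
qed

end

theorem proposition4p1:
  fixes sc :: "complex \<Rightarrow> 'a::ab_group_add \<Rightarrow> 'a"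
    and ip :: "'a \<Rightarrow> 'a \<Rightarrow> complex"
    and p :: real
  assumes "is_complex_hilbert sc ip"
    and "is_separable ip"
    and "0 < p"
  shows "C_set sc ip 1 \<subseteq> C_set sc ip p"
proof -
  interpret hil sc ip using assms(1) by (simp add: hil_def)
  show ?thesis by (rule main_incl[OF assms(3)])
qed

end
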